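(* Fix measurable $\pi_0,\pi_1:\mathcal X\to\{0,1\}$ and set $\tau(X)=\mu(X,1)-\mu(X,0)$, $$\mathrm{FNA}^-_{\pi_0\to\pi_1}=E_P\big[\max\{(\pi_0(X)-\pi_1(X))\tau(X),\,0\}\big],$$ $$\mathrm{FNA}^+_{\pi_0\to\pi_1}=E_P\Big[\min\big\{\pi_1(X)(1-\pi_0(X))\mu(X,0)+\pi_0(X)(1-\pi_1(X))(1-\mu(X,0)),\ \pi_1(X)(1-\pi_0(X))(1-\mu(X,1))+\pi_0(X)(1-\pi_1(X))\mu(X,1)\big\}\Big].$$ Then the identified set is exactly the closed interval $\mathcal S(\mathrm{FNA}_{\pi_0\to\pi_1};P)=[\mathrm{FNA}^-_{\pi_0\to\pi_1},\,\mathrm{FNA}^+_{\pi_0\to\pi_1}]$. In particular, for the constant policies $\pi_0\equiv0,\pi_1\equiv1$, the identified set of $\mathrm{FNA}=\mathbb P(Y(0)=1,Y(1)=0)$ is $[-E_P[\min\{\tau(X),0\}],\ E_P[\min\{\mu(X,0),1-\mu(X,1)\}]]$.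
   Context: Let $\mathcal X$ be a measurable covariate space. A full (unobservable) distribution $\mathbb P$ is a law of $(X,A,Y(0),Y(1))$ with $X\in\mathcal X$, $A\in\{0,1\}$, $Y(0),Y(1)\in\{0,1\}$. The coarsening map $\mathcal C(x,a,y_0,y_1)=(x,a,ay_1+(1-a)y_0)$ induces the observed-data distribution $P=\mathbb P\circ\mathcal C^{-1}$ of $(X,A,Y)$, where $Y=Y(A)$. Write $e(X)=P(A=1\mid X)$ and assume overlap: $e(X)\in(0,1)$ a.s. Let $\mu(X,a)=E_P[Y\mid X,A=a]$. For policies $\pi_0,\pi_1:\mathcal X\to\{0,1\}$, define $\mathrm{FNA}_{\pi_0\to\pi_1}(\mathbb P)=\mathbb P\big(Y(\pi_0(X))=1,\,Y(\pi_1(X))=0\big)$. For a parameter $\psi(\mathbb P)$ its identified set is $\mathcal S(\psi;P)=\{\psi(\mathbb P):\ \mathbb P\circ\mathcal C^{-1}=P,\ \mathbb P(A=1\mid X)=\mathbb P(A=1\mid X,Y(a))\text{ for }a=0,1\}$ (the last condition is unconfoundedness). *)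

theory Defs
  imports "HOL-Probability.Probability"
begin

text \<open>Full (unobservable) data: (X, A, Y(0), Y(1)); observed data: (X, A, Y).
  Binary variables are encoded as bool (True = 1).\<close>

type_synonym 'x full = "'x \<times> bool \<times> bool \<times> bool"
type_synonym 'x obs = "'x \<times> bool \<times> bool"

definition full_space :: "'x measure \<Rightarrow> 'x full measure" where
  "full_space M = M \<Otimes>\<^sub>M (count_space UNIV \<Otimes>\<^sub>M (count_space UNIV \<Otimes>\<^sub>M count_space UNIV))"

definition obs_space :: "'x measure \<Rightarrow> 'x obs measure" where
  "obs_space M = M \<Otimes>\<^sub>M (count_space UNIV \<Otimes>\<^sub>M count_space UNIV)"

definition fX :: "'x full \<Rightarrow> 'x" where "fX w = fst w"
definition fA :: "'x full \<Rightarrow> bool" where "fA w = fst (snd w)"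
definition pot :: "'x full \<Rightarrow> bool \<Rightarrow> bool" where
  "pot w b = (if b then snd (snd (snd w)) else fst (snd (snd w)))"

definition oX :: "'x obs \<Rightarrow> 'x" where "oX w = fst w"
definition oA :: "'x obs \<Rightarrow> bool" where "oA w = fst (snd w)"
definition oY :: "'x obs \<Rightarrow> bool" where "oY w = snd (snd w)"

definition coarsen :: "'x full \<Rightarrow> 'x obs" where
  "coarsen w = (fX w, fA w, pot w (fA w))"

definition unconfounded :: "'x measure \<Rightarrow> 'x full measure \<Rightarrow> bool" where
  "unconfounded M F \<longleftrightarrow> (\<forall>b::bool. AE w in F.
     real_cond_exp F (vimage_algebra (space F) fX M) (\<lambda>w. of_bool (fA w)) w
   = real_cond_exp F (vimage_algebra (space F) (\<lambda>w. (fX w, pot w b)) (M \<Otimes>\<^sub>M count_space UNIV))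
       (\<lambda>w. of_bool (fA w)) w)"

definition identified_set ::
  "'x measure \<Rightarrow> 'x obs measure \<Rightarrow> ('x full measure \<Rightarrow> real) \<Rightarrow> real set" where
  "identified_set M P \<psi> = {\<psi> F | F. prob_space F \<and> sets F = sets (full_space M)
      \<and> distr F (obs_space M) coarsen = P \<and> unconfounded M F}"

definition FNA :: "('x \<Rightarrow> bool) \<Rightarrow> ('x \<Rightarrow> bool) \<Rightarrow> 'x full measure \<Rightarrow> real" where
  "FNA \<pi>0 \<pi>1 F = measure F {w \<in> space F. pot w (\<pi>0 (fX w)) \<and> \<not> pot w (\<pi>1 (fX w))}"

end

theory Submission
  imports Defs
begin

lemma cc2: "count_space (UNIV::'a::countable set) \<Otimes>\<^sub>M count_space (UNIV::'b::countable set) = count_space UNIV"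
  by (simp add: pair_measure_countable)
lemma full_space_eq: "full_space M = M \<Otimes>\<^sub>M count_space UNIV"
  unfolding full_space_def by (simp add: cc2)
lemma obs_space_eq: "obs_space M = M \<Otimes>\<^sub>M count_space UNIV"
  unfolding obs_space_def by (simp add: cc2)

lemma coarsen_simps[simp]: "oX (coarsen w) = fX w" "oA (coarsen w) = fA w" "oY (coarsen w) = pot w (fA w)"
  by (simp_all add: coarsen_def oX_def oA_def oY_def)

lemma oX_measM[measurable]: "oX \<in> measurable (M \<Otimes>\<^sub>M N) M" unfolding oX_def by simp
lemma oA_measM[measurable]: "Measurable.pred (M \<Otimes>\<^sub>M count_space UNIV) oA" unfolding oA_def
  by (rule measurable_compose[OF measurable_snd]) simp
lemma oY_measM[measurable]: "Measurable.pred (M \<Otimes>\<^sub>M count_space UNIV) oY" unfolding oY_def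
  by (rule measurable_compose[OF measurable_snd]) simp

lemma fX_measM[measurable]: "fX \<in> measurable (M \<Otimes>\<^sub>M N) M" unfolding fX_def by simp
lemma fA_measM[measurable]: "Measurable.pred (M \<Otimes>\<^sub>M count_space UNIV) fA" unfolding fA_def
  by (rule measurable_compose[OF measurable_snd]) simp
lemma pot_measM[measurable]: "Measurable.pred (M \<Otimes>\<^sub>M count_space UNIV) (\<lambda>w. pot w b)" unfolding pot_def
  by (rule measurable_compose[OF measurable_snd]) simp
lemma potA_measM[measurable]: "Measurable.pred (M \<Otimes>\<^sub>M count_space UNIV) (\<lambda>w. pot w (fA w))" unfolding pot_def fA_def
  by (rule measurable_compose[OF measurable_snd]) simp

lemma pair_pot_meas[measurable]: "(\<lambda>w. (fX w, pot w b)) \<in> measurable (M \<Otimes>\<^sub>M count_space UNIV) (M \<Otimes>\<^sub>M count_space UNIV)"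
  by measurable

lemma fms_vimage:
  assumes "prob_space N" "f \<in> measurable N K"
  shows "finite_measure_subalgebra N (vimage_algebra (space N) f K)"
  unfolding finite_measure_subalgebra_def finite_measure_subalgebra_axioms_def subalgebra_def
  using sets_image_in_sets[OF _ assms(2)] assms(1) prob_space.finite_measure by auto

lemma bnd_integrable:
  fixes f :: "'a \<Rightarrow> real"
  assumes "finite_measure N" "f \<in> borel_measurable N" "\<And>x. \<bar>f x\<bar> \<le> c"
  shows "integrable N f"
  using finite_measure.integrable_const_bound[OF assms(1), of f c] assms(2,3) by auto

lemma int_cong_AE: "AE x in M. f x = g x \<Longrightarrow> f \<in> borel_measurable M \<Longrightarrow> g \<in> borel_measurable M
   \<Longrightarrow> integral\<^sup>L M f = integral\<^sup>L M g"
  by (rule integral_cong_AE)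

lemma bnd_mult01:
  fixes a q c :: real
  assumes "\<bar>a\<bar> \<le> c" "0 \<le> q" "q \<le> 1"
  shows "\<bar>a * q\<bar> \<le> c"
proof -
  have "\<bar>a * q\<bar> = \<bar>a\<bar> * q" using assms(2) by (simp add: abs_mult)
  also have "\<dots> \<le> \<bar>a\<bar>" using assms(2,3) by (intro mult_right_le_one_le) auto
  finally show ?thesis using assms(1) by simp
qed

lemma sum_UNIV3:
  "(\<Sum>t\<in>(UNIV::(bool \<times> bool \<times> bool) set). f t) =
     f (False, False, False) + f (False, False, True) + f (False, True, False) + f (False, True, True) +
     f (True, False, False) + f (True, False, True) + f (True, True, False) + f (True, True, True)"
proof -
  have U: "(UNIV::(bool \<times> bool \<times> bool) set) = {(False, False, False), (False, False, True), (False, True, False),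
      (False, True, True), (True, False, False), (True, False, True), (True, True, False), (True, True, True)}"
    by auto
  show ?thesis by (subst U) (simp add: add.assoc)
qed

lemma sum_UNIV2:
  "(\<Sum>t\<in>(UNIV::(bool \<times> bool) set). f t) = f (False, False) + f (False, True) + f (True, False) + f (True, True)"
proof -
  have U: "(UNIV::(bool \<times> bool) set) = {(False, False), (False, True), (True, False), (True, True)}"
    by auto
  show ?thesis by (subst U) (simp add: add.assoc)
qed

lemma coarsen_meas_gen: "coarsen \<in> measurable (M \<Otimes>\<^sub>M count_space UNIV) (M \<Otimes>\<^sub>M count_space UNIV)"
proof -
  have eq: "coarsen = (\<lambda>w. (fst w, (\<lambda>t. (fst t, if fst t then snd (snd t) else fst (snd t))) (snd w)))"
    by (auto simp: coarsen_def fX_def fA_def pot_def)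
  have m: "(\<lambda>w. (fst w, (\<lambda>t. (fst t, if fst t then snd (snd t) else fst (snd t))) (snd w)))
     \<in> measurable (M \<Otimes>\<^sub>M count_space UNIV) (M \<Otimes>\<^sub>M count_space UNIV)"
    apply (rule measurable_Pair)
     apply simp
    apply (rule measurable_compose[OF measurable_snd])
    apply simp
    done
  show ?thesis unfolding eq by (rule m)
qed

lemma snd_any_meas: "(\<lambda>w. (\<phi> (snd w) :: real)) \<in> borel_measurable (M \<Otimes>\<^sub>M count_space UNIV)"
  by (rule measurable_compose[OF measurable_snd]) simp

definition clip01 :: "real \<Rightarrow> real" where "clip01 r = max 0 (min 1 r)"

lemma pot_split: "pot w c = (if c then pot w True else pot w False)"
  by (simp add: pot_def)

lemma clip01_bnd[simp]: "0 \<le> clip01 r" "clip01 r \<le> 1"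
  by (auto simp: clip01_def)
lemma clip01_id: "0 \<le> r \<Longrightarrow> r \<le> 1 \<Longrightarrow> clip01 r = r"
  by (auto simp: clip01_def)
lemma clip01_meas[measurable]: "clip01 \<in> borel_measurable borel"
  unfolding clip01_def by measurable

locale obs_setting =
  fixes M :: "'x measure" and P :: "'x obs measure"
    and e :: "'x \<Rightarrow> real" and \<mu> :: "'x \<Rightarrow> bool \<Rightarrow> real"
  assumes P_prob: "prob_space P"
    and P_sets: "sets P = sets (obs_space M)"
    and e_meas: "e \<in> borel_measurable M"
    and e_version: "AE w in P. real_cond_exp P (vimage_algebra (space P) oX M)
                      (\<lambda>w. of_bool (oA w)) w = e (oX w)"
    and overlap: "AE w in P. 0 < e (oX w) \<and> e (oX w) < 1"
    and mu_meas: "(\<lambda>(x, a). \<mu> x a) \<in> borel_measurable (M \<Otimes>\<^sub>M count_space UNIV)"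
    and mu_version: "AE w in P. real_cond_exp P
                      (vimage_algebra (space P) (\<lambda>w. (oX w, oA w)) (M \<Otimes>\<^sub>M count_space UNIV))
                      (\<lambda>w. of_bool (oY w)) w = \<mu> (oX w) (oA w)"
begin

interpretation P: prob_space P by (rule P_prob)

lemma measP: "measurable P N = measurable (M \<Otimes>\<^sub>M count_space UNIV) N"
  by (rule measurable_cong_sets) (simp_all add: P_sets obs_space_eq)

lemma oX_meas[measurable]: "oX \<in> measurable P M"
  unfolding measP oX_def by simp
lemma oA_meas[measurable]: "Measurable.pred P oA"
  unfolding measP oA_def by (rule measurable_compose[OF measurable_snd]) simp
lemma oY_meas[measurable]: "Measurable.pred P oY"
  unfolding measP oY_def by (rule measurable_compose[OF measurable_snd]) simp
lemma oXA_meas[measurable]: "(\<lambda>w. (oX w, oA w)) \<in> measurable P (M \<Otimes>\<^sub>M count_space UNIV)"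
  by measurable

lemma e_meas'[measurable]: "e \<in> borel_measurable M" by (rule e_meas)
lemma mu_meas'[measurable]: "(\<lambda>x. \<mu> x a) \<in> borel_measurable M"
proof -
  have "(\<lambda>x. (\<lambda>(x, a). \<mu> x a) (x, a)) \<in> borel_measurable M"
    by (rule measurable_compose[OF _ mu_meas]) simp
  then show ?thesis by simp
qed

abbreviation ec where "ec x \<equiv> clip01 (e x)"
abbreviation mc where "mc x a \<equiv> clip01 (\<mu> x a)"
definition eb :: "'x \<Rightarrow> bool \<Rightarrow> real" where "eb x a = (if a then ec x else 1 - ec x)"
lemma eb_meas[measurable]: "(\<lambda>x. eb x a) \<in> borel_measurable M"
  unfolding eb_def by measurable
lemma eb_bnd[simp]: "0 \<le> eb x a" "eb x a \<le> 1"
  by (auto simp: eb_def)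

lemma P1:
  assumes [measurable]: "h \<in> borel_measurable M" and hb: "\<And>x. \<bar>h x\<bar> \<le> c"
  shows "(\<integral>w. h (oX w) * of_bool (oA w) \<partial>P) = (\<integral>w. h (oX w) * e (oX w) \<partial>P)"
proof -
  interpret S: finite_measure_subalgebra P "vimage_algebra (space P) oX M"
    by (rule fms_vimage) (simp_all add: P_prob)
  have hm: "(\<lambda>w. h (oX w)) \<in> borel_measurable (vimage_algebra (space P) oX M)"
    by (rule measurable_compose[OF measurable_vimage_algebra1 assms(1)])
       (use measurable_space[OF oX_meas] in auto)
  have int: "integrable P (\<lambda>w. h (oX w) * of_bool (oA w))"
  proof (rule bnd_integrable[where c=c])
    show "finite_measure P" by (rule P.finite_measure_axioms)
    show "(\<lambda>w. h (oX w) * of_bool (oA w)) \<in> borel_measurable P" by measurable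
    fix w show "\<bar>h (oX w) * of_bool (oA w)\<bar> \<le> c" using hb[of "oX w"] hb[of undefined] by (cases "oA w") auto
  qed
  have "(\<integral>w. h (oX w) * of_bool (oA w) \<partial>P) = (\<integral>w. h (oX w) * real_cond_exp P (vimage_algebra (space P) oX M) (\<lambda>w. of_bool (oA w)) w \<partial>P)"
    by (rule S.real_cond_exp_intg(2)[symmetric]) (use int hm in auto)
  also have "\<dots> = (\<integral>w. h (oX w) * e (oX w) \<partial>P)"
    by (rule integral_cong_AE) (use e_version in auto)
  finally show ?thesis .
qed

lemma AE_e: "AE w in P. e (oX w) = ec (oX w) \<and> 0 < ec (oX w) \<and> ec (oX w) < 1"
  using overlap by eventually_elim (auto simp: clip01_id)

lemma P1c:
  assumes [measurable]: "h \<in> borel_measurable M" and hb: "\<And>x. \<bar>h x\<bar> \<le> c"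
  shows "(\<integral>w. h (oX w) * of_bool (oA w = a) \<partial>P) = (\<integral>w. h (oX w) * eb (oX w) a \<partial>P)"
proof -
  have i1: "integrable P (\<lambda>w. h (oX w))"
    by (rule bnd_integrable[where c=c]) (use P.finite_measure_axioms hb in auto)
  have i2: "integrable P (\<lambda>w. h (oX w) * of_bool (oA w))"
  proof (rule bnd_integrable[where c=c])
    have c0: "0 \<le> c" using abs_ge_zero[of "h undefined"] hb[of undefined] by linarith
    fix w show "\<bar>h (oX w) * of_bool (oA w)\<bar> \<le> c" using c0 hb[of "oX w"] by (cases "oA w") auto
  qed (use P.finite_measure_axioms in auto)
  have i3: "integrable P (\<lambda>w. h (oX w) * ec (oX w))"
  proof (rule bnd_integrable[where c=c])
    fix w show "\<bar>h (oX w) * ec (oX w)\<bar> \<le> c"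
      using hb[of "oX w"] by (auto simp: abs_mult intro: order_trans[OF mult_right_le_one_le])
  qed (use P.finite_measure_axioms in auto)
  have E: "(\<integral>w. h (oX w) * of_bool (oA w) \<partial>P) = (\<integral>w. h (oX w) * ec (oX w) \<partial>P)"
    unfolding P1[OF assms] by (rule integral_cong_AE) (use AE_e in auto)
  show ?thesis
  proof (cases a)
    case True then show ?thesis using E by (simp add: eb_def)
  next
    case False
    have "(\<integral>w. h (oX w) * of_bool (oA w = a) \<partial>P) = (\<integral>w. h (oX w) - h (oX w) * of_bool (oA w) \<partial>P)"
      using False by (intro Bochner_Integration.integral_cong) auto
    also have "\<dots> = (\<integral>w. h (oX w) \<partial>P) - (\<integral>w. h (oX w) * ec (oX w) \<partial>P)"
      using i1 i2 E by simp
    also have "\<dots> = (\<integral>w. h (oX w) - h (oX w) * ec (oX w) \<partial>P)"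
      using i1 i3 by simp
    also have "\<dots> = (\<integral>w. h (oX w) * eb (oX w) a \<partial>P)"
      using False by (intro Bochner_Integration.integral_cong) (auto simp: eb_def algebra_simps)
    finally show ?thesis .
  qed
qed

lemma P2:
  assumes [measurable]: "B \<in> sets M"
  shows "(\<integral>w. indicator B (oX w) * of_bool (oA w = b) * of_bool (oY w) \<partial>P)
       = (\<integral>w. indicator B (oX w) * of_bool (oA w = b) * \<mu> (oX w) b \<partial>P)"
proof -
  let ?G = "vimage_algebra (space P) (\<lambda>w. (oX w, oA w)) (M \<Otimes>\<^sub>M count_space UNIV)"
  interpret S: finite_measure_subalgebra P ?G
    by (rule fms_vimage) (simp_all add: P_prob)
  have g1: "(\<lambda>w. (oX w, oA w)) \<in> measurable ?G (M \<Otimes>\<^sub>M count_space UNIV)"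
    by (rule measurable_vimage_algebra1) (use measurable_space[OF oXA_meas] in auto)
  have hm: "(\<lambda>w. indicator (B \<times> {b}) (oX w, oA w) :: real) \<in> borel_measurable ?G"
    by (rule measurable_compose[OF g1]) measurable
  have eq: "\<And>w. indicator (B \<times> {b}) (oX w, oA w) = (indicator B (oX w) * of_bool (oA w = b) :: real)"
    by (auto simp: indicator_def)
  have int: "integrable P (\<lambda>w. indicator (B \<times> {b}) (oX w, oA w) * of_bool (oY w) :: real)"
    by (rule bnd_integrable[where c=1]) (use P.finite_measure_axioms in \<open>auto simp: eq\<close>)
  have "(\<integral>w. indicator (B \<times> {b}) (oX w, oA w) * of_bool (oY w) \<partial>P)
      = (\<integral>w. indicator (B \<times> {b}) (oX w, oA w) * real_cond_exp P ?G (\<lambda>w. of_bool (oY w)) w \<partial>P)"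
    by (rule S.real_cond_exp_intg(2)[symmetric]) (use int hm in auto)
  also have "\<dots> = (\<integral>w. indicator (B \<times> {b}) (oX w, oA w) * \<mu> (oX w) b \<partial>P)"
  proof (rule integral_cong_AE)
    show "AE w in P. indicator (B \<times> {b}) (oX w, oA w) * real_cond_exp P ?G (\<lambda>w. of_bool (oY w)) w =
       indicator (B \<times> {b}) (oX w, oA w) * \<mu> (oX w) b"
      using mu_version proof eventually_elim
      case (elim w) then show ?case by (cases "oA w = b") (auto simp: indicator_def)
    qed
  qed (use hm measurable_from_subalg[OF S.subalg] in auto)
  finally show ?thesis by (simp add: eq)
qed

lemma mu_obs_bnd: "AE w in P. 0 \<le> \<mu> (oX w) (oA w) \<and> \<mu> (oX w) (oA w) \<le> 1"
proof -
  let ?G = "vimage_algebra (space P) (\<lambda>w. (oX w, oA w)) (M \<Otimes>\<^sub>M count_space UNIV)"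
  interpret S: finite_measure_subalgebra P ?G
    by (rule fms_vimage) (simp_all add: P_prob)
  have int: "integrable P (\<lambda>w. of_bool (oY w) :: real)"
    by (rule bnd_integrable[where c=1]) (use P.finite_measure_axioms in auto)
  have "AE w in P. real_cond_exp P ?G (\<lambda>w. of_bool (oY w)) w \<ge> 0"
    by (rule S.real_cond_exp_ge_c) (use int in auto)
  moreover have "AE w in P. real_cond_exp P ?G (\<lambda>w. of_bool (oY w)) w \<le> 1"
    by (rule S.real_cond_exp_le_c) (use int in auto)
  ultimately show ?thesis using mu_version by eventually_elim auto
qed

lemma mu_arm_bnd: "AE w in P. 0 \<le> \<mu> (oX w) b \<and> \<mu> (oX w) b \<le> 1"
proof -
  define B where "B = {x\<in>space M. \<not>(0 \<le> \<mu> x b \<and> \<mu> x b \<le> 1)}"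
  have [measurable]: "B \<in> sets M" unfolding B_def by measurable
  have "AE w in P. indicator B (oX w) * of_bool (oA w = b) = (0::real)"
    using mu_obs_bnd proof eventually_elim
    case (elim w) then show ?case by (cases "oA w = b") (auto simp: indicator_def B_def)
  qed
  then have "(\<integral>w. indicator B (oX w) * of_bool (oA w = b) \<partial>P) = (\<integral>w. (0::real) \<partial>P)"
    by (rule int_cong_AE) (measurable, measurable)
  then have "(\<integral>w. indicator B (oX w) * eb (oX w) b \<partial>P) = 0"
    using P1c[of "indicator B" 1 b] by simp
  moreover have "integrable P (\<lambda>w. indicator B (oX w) * eb (oX w) b)"
    by (rule bnd_integrable[where c=1]) (use P.finite_measure_axioms in \<open>auto simp: indicator_def\<close>)
  ultimately have "AE w in P. indicator B (oX w) * eb (oX w) b = 0"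
    by (subst (asm) integral_nonneg_eq_0_iff_AE) auto
  then show ?thesis using AE_e AE_space
  proof eventually_elim
    case (elim w)
    have "oX w \<in> space M" using measurable_space[OF oX_meas] elim(3) by auto
    moreover have "eb (oX w) b > 0" using elim by (auto simp: eb_def)
    ultimately show ?case using elim(1) by (auto simp: indicator_def B_def)
  qed
qed

lemma AE_mu: "AE w in P. \<forall>b. \<mu> (oX w) b = mc (oX w) b"
  using mu_arm_bnd[of True] mu_arm_bnd[of False]
proof eventually_elim
  case (elim w) then show ?case by (auto simp: clip01_id) (metis (full_types) clip01_id)
qed

lemma atom:
  assumes [measurable]: "B \<in> sets M"
  shows "(\<integral>w. indicator B (oX w) * of_bool (oA w = a) * of_bool (oY w) \<partial>P)
       = (\<integral>w. indicator B (oX w) * mc (oX w) a * eb (oX w) a \<partial>P)"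
proof -
  have "(\<integral>w. indicator B (oX w) * of_bool (oA w = a) * of_bool (oY w) \<partial>P)
       = (\<integral>w. indicator B (oX w) * of_bool (oA w = a) * \<mu> (oX w) a \<partial>P)" by (rule P2) simp
  also have "\<dots> = (\<integral>w. (indicator B (oX w) * mc (oX w) a) * of_bool (oA w = a) \<partial>P)"
  proof (rule integral_cong_AE)
    show "AE w in P. indicator B (oX w) * of_bool (oA w = a) * \<mu> (oX w) a =
        (indicator B (oX w) * mc (oX w) a) * of_bool (oA w = a)"
      using AE_mu by eventually_elim auto
  qed (measurable, measurable)
  also have "\<dots> = (\<integral>w. indicator B (oX w) * mc (oX w) a * eb (oX w) a \<partial>P)"
    by (rule P1c[where c=1]) (auto simp: indicator_def)
  finally show ?thesis .
qed

definition mq :: "'x \<Rightarrow> bool \<Rightarrow> bool \<Rightarrow> real" where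
  "mq x a y = (if y then mc x a else 1 - mc x a)"

lemma mq_meas[measurable]: "(\<lambda>x. mq x a y) \<in> borel_measurable M"
  unfolding mq_def by measurable

lemma atom_y:
  assumes [measurable]: "B \<in> sets M"
  shows "(\<integral>w. indicator B (oX w) * of_bool (oA w = a) * of_bool (oY w = y) \<partial>P)
       = (\<integral>w. indicator B (oX w) * mq (oX w) a y * eb (oX w) a \<partial>P)"
proof (cases y)
  case True then show ?thesis using atom[OF assms, of a] by (simp add: mq_def)
next
  case False
  have i1: "integrable P (\<lambda>w. indicator B (oX w) * of_bool (oA w = a) :: real)"
    by (rule bnd_integrable[where c=1]) (use P.finite_measure_axioms in auto)
  have i2: "integrable P (\<lambda>w. indicator B (oX w) * of_bool (oA w = a) * of_bool (oY w) :: real)"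
    by (rule bnd_integrable[where c=1]) (use P.finite_measure_axioms in auto)
  have i3: "integrable P (\<lambda>w. indicator B (oX w) * eb (oX w) a :: real)"
    by (rule bnd_integrable[where c=1]) (use P.finite_measure_axioms in \<open>auto simp: indicator_def\<close>)
  have i4: "integrable P (\<lambda>w. indicator B (oX w) * mc (oX w) a * eb (oX w) a :: real)"
    by (rule bnd_integrable[where c=1]) (use P.finite_measure_axioms in \<open>auto simp: indicator_def abs_mult intro: mult_le_one\<close>)
  have "(\<integral>w. (indicator B (oX w)::real) * of_bool (oA w = a) * of_bool (oY w = y) \<partial>P)
      = (\<integral>w. indicator B (oX w) * of_bool (oA w = a) - indicator B (oX w) * of_bool (oA w = a) * of_bool (oY w) \<partial>P)"
    using False by (intro Bochner_Integration.integral_cong) auto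
  also have "\<dots> = (\<integral>w. (indicator B (oX w)::real) * of_bool (oA w = a) \<partial>P) - (\<integral>w. indicator B (oX w) * of_bool (oA w = a) * of_bool (oY w) \<partial>P)"
    using i1 i2 by simp
  also have "\<dots> = (\<integral>w. indicator B (oX w) * eb (oX w) a \<partial>P) - (\<integral>w. indicator B (oX w) * mc (oX w) a * eb (oX w) a \<partial>P)"
    using atom[OF assms, of a] P1c[of "indicator B" 1 a] by simp
  also have "\<dots> = (\<integral>w. indicator B (oX w) * eb (oX w) a - indicator B (oX w) * mc (oX w) a * eb (oX w) a \<partial>P)"
    using i3 i4 by simp
  also have "\<dots> = (\<integral>w. indicator B (oX w) * mq (oX w) a y * eb (oX w) a \<partial>P)"
    using False by (intro Bochner_Integration.integral_cong) (auto simp: mq_def algebra_simps)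
  finally show ?thesis .
qed

definition Lc :: "('x \<Rightarrow> bool) \<Rightarrow> ('x \<Rightarrow> bool) \<Rightarrow> 'x \<Rightarrow> real" where
  "Lc \<pi>0 \<pi>1 x = max ((of_bool (\<pi>0 x) - of_bool (\<pi>1 x)) * (mc x True - mc x False)) 0"
definition Uc :: "('x \<Rightarrow> bool) \<Rightarrow> ('x \<Rightarrow> bool) \<Rightarrow> 'x \<Rightarrow> real" where
  "Uc \<pi>0 \<pi>1 x = min (of_bool (\<pi>1 x) * (1 - of_bool (\<pi>0 x)) * mc x False
                   + of_bool (\<pi>0 x) * (1 - of_bool (\<pi>1 x)) * (1 - mc x False))
                  (of_bool (\<pi>1 x) * (1 - of_bool (\<pi>0 x)) * (1 - mc x True)
                   + of_bool (\<pi>0 x) * (1 - of_bool (\<pi>1 x)) * mc x True)"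

lemma Lo_eq:
  assumes [measurable]: "\<pi>0 \<in> M \<rightarrow>\<^sub>M count_space UNIV" "\<pi>1 \<in> M \<rightarrow>\<^sub>M count_space UNIV"
  shows "(\<integral>w. max ((of_bool (\<pi>0 (oX w)) - of_bool (\<pi>1 (oX w)))
                      * (\<mu> (oX w) True - \<mu> (oX w) False)) 0 \<partial>P) = (\<integral>w. Lc \<pi>0 \<pi>1 (oX w) \<partial>P)"
proof -
  have "AE w in P. max ((of_bool (\<pi>0 (oX w)) - of_bool (\<pi>1 (oX w)))
                      * (\<mu> (oX w) True - \<mu> (oX w) False)) 0 = Lc \<pi>0 \<pi>1 (oX w)"
    using AE_mu by eventually_elim (simp add: Lc_def)
  then show ?thesis unfolding Lc_def by (rule int_cong_AE) (measurable, measurable)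
qed

lemma Up_eq:
  assumes [measurable]: "\<pi>0 \<in> M \<rightarrow>\<^sub>M count_space UNIV" "\<pi>1 \<in> M \<rightarrow>\<^sub>M count_space UNIV"
  shows "(\<integral>w. min (of_bool (\<pi>1 (oX w)) * (1 - of_bool (\<pi>0 (oX w))) * \<mu> (oX w) False
                   + of_bool (\<pi>0 (oX w)) * (1 - of_bool (\<pi>1 (oX w))) * (1 - \<mu> (oX w) False))
                  (of_bool (\<pi>1 (oX w)) * (1 - of_bool (\<pi>0 (oX w))) * (1 - \<mu> (oX w) True)
                   + of_bool (\<pi>0 (oX w)) * (1 - of_bool (\<pi>1 (oX w))) * \<mu> (oX w) True) \<partial>P)
     = (\<integral>w. Uc \<pi>0 \<pi>1 (oX w) \<partial>P)"
proof -
  have "AE w in P. min (of_bool (\<pi>1 (oX w)) * (1 - of_bool (\<pi>0 (oX w))) * \<mu> (oX w) False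
                   + of_bool (\<pi>0 (oX w)) * (1 - of_bool (\<pi>1 (oX w))) * (1 - \<mu> (oX w) False))
                  (of_bool (\<pi>1 (oX w)) * (1 - of_bool (\<pi>0 (oX w))) * (1 - \<mu> (oX w) True)
                   + of_bool (\<pi>0 (oX w)) * (1 - of_bool (\<pi>1 (oX w))) * \<mu> (oX w) True) = Uc \<pi>0 \<pi>1 (oX w)"
    using AE_mu by eventually_elim (simp add: Uc_def)
  then show ?thesis unfolding Uc_def by (rule int_cong_AE) (measurable, measurable)
qed

end

locale fsetting = obs_setting M P e \<mu> for M :: "'x measure" and P e \<mu> +
  fixes F :: "'x full measure"
  assumes F_prob: "prob_space F"
    and F_sets: "sets F = sets (full_space M)"
    and F_distr: "distr F (obs_space M) coarsen = P"
    and F_unc: "unconfounded M F"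
begin

interpretation P: prob_space P by (rule P_prob)
interpretation F: prob_space F by (rule F_prob)

lemma measF: "measurable F N = measurable (M \<Otimes>\<^sub>M count_space UNIV) N"
  by (rule measurable_cong_sets) (simp_all add: F_sets full_space_eq)

lemma fX_measF[measurable]: "fX \<in> measurable F M"
  unfolding measF fX_def by simp
lemma fA_measF[measurable]: "Measurable.pred F fA"
  unfolding measF fA_def by (rule measurable_compose[OF measurable_snd]) simp
lemma pot_measF[measurable]: "Measurable.pred F (\<lambda>w. pot w b)"
  unfolding measF pot_def by (rule measurable_compose[OF measurable_snd]) simp
lemma potA_measF[measurable]: "Measurable.pred F (\<lambda>w. pot w (fA w))"
  unfolding measF pot_def fA_def by (rule measurable_compose[OF measurable_snd]) simp

lemma pair_snd_meas:
  fixes g :: "'b \<Rightarrow> 'c"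
  shows "(\<lambda>w. (fst w, g (snd w))) \<in> measurable (M \<Otimes>\<^sub>M count_space UNIV) (M \<Otimes>\<^sub>M count_space UNIV)"
  apply (rule measurable_Pair)
   apply simp
  apply (rule measurable_compose[OF measurable_snd])
  apply simp
  done

lemma coarsen_meas: "coarsen \<in> measurable F (obs_space M)"
proof -
  have eq: "coarsen = (\<lambda>w. (fst w, (fst (snd w), if fst (snd w) then snd (snd (snd w)) else fst (snd (snd w)))))"
    by (auto simp: coarsen_def fX_def fA_def pot_def)
  have m: "(\<lambda>w. (fst w, (fst (snd w), if fst (snd w) then snd (snd (snd w)) else fst (snd (snd w)))))
     \<in> measurable (M \<Otimes>\<^sub>M count_space UNIV) (M \<Otimes>\<^sub>M count_space UNIV)"
    by (rule pair_snd_meas[where g="\<lambda>t. (fst t, if fst t then snd (snd t) else fst (snd t))"])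
  show ?thesis unfolding obs_space_eq measF eq by (rule m)
qed

lemma Dist:
  assumes "h \<in> borel_measurable (M \<Otimes>\<^sub>M count_space UNIV)"
  shows "(\<integral>z. h z \<partial>P) = (\<integral>w. (h (coarsen w) :: real) \<partial>F)"
proof -
  have "(\<integral>z. h z \<partial>P) = (\<integral>z. h z \<partial>distr F (obs_space M) coarsen)" by (simp add: F_distr)
  also have "\<dots> = (\<integral>w. h (coarsen w) \<partial>F)"
    by (rule integral_distr[OF coarsen_meas]) (use assms in \<open>simp add: obs_space_eq\<close>)
  finally show ?thesis .
qed

lemma AE_F:
  assumes "AE w in P. Q (oX w)" and [measurable]: "Measurable.pred M Q"
  shows "AE w in F. Q (fX w)"
proof -
  have [measurable]: "oX \<in> measurable (obs_space M) M" unfolding obs_space_eq oX_def by simp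
  have "AE z in distr F (obs_space M) coarsen. Q (oX z)" unfolding F_distr by (rule assms(1))
  then have "AE w in F. Q (oX (coarsen w))"
    by (subst (asm) AE_distr_iff[OF coarsen_meas]) auto
  then show ?thesis by simp
qed

lemma AE_eF: "AE w in F. 0 < ec (fX w) \<and> ec (fX w) < 1"
  by (rule AE_F) (use AE_e in \<open>auto elim: eventually_mono\<close>)

lemma setint_pre:
  assumes [measurable]: "B \<in> sets M"
  shows "(\<integral>w\<in>(fX -` B \<inter> space F). (f w::real) \<partial>F) = (\<integral>w. indicator B (fX w) * f w \<partial>F)"
  unfolding set_lebesgue_integral_def
  by (intro Bochner_Integration.integral_cong) (auto simp: indicator_def)

lemma c1_eq: "AE w in F. real_cond_exp F (vimage_algebra (space F) fX M) (\<lambda>w. of_bool (fA w)) w = ec (fX w)"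
proof -
  interpret SX: finite_measure_subalgebra F "vimage_algebra (space F) fX M"
    by (rule fms_vimage) (simp_all add: F_prob)
  have sp: "fX \<in> space F \<rightarrow> space M" using measurable_space[OF fX_measF] by auto
  show ?thesis
  proof (rule SX.real_cond_exp_charact)
    fix A assume "A \<in> sets (vimage_algebra (space F) fX M)"
    then obtain B where hB: "B \<in> sets M" and A: "A = fX -` B \<inter> space F"
      unfolding sets_vimage_algebra2[OF sp] by auto
    note hB[measurable]
    have "(\<integral>w. (indicator B (fX w)::real) * of_bool (fA w) \<partial>F) = (\<integral>z. indicator B (oX z) * of_bool (oA z) \<partial>P)"
      by (subst Dist) (measurable, simp?)
    also have "\<dots> = (\<integral>z. indicator B (oX z) * eb (oX z) True \<partial>P)"
      using P1c[of "indicator B" 1 True] by simp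
    also have "\<dots> = (\<integral>w. indicator B (fX w) * ec (fX w) \<partial>F)"
      by (subst Dist) (measurable, (simp add: eb_def)?)
    finally show "(\<integral>w\<in>A. of_bool (fA w) \<partial>F) = (\<integral>w\<in>A. ec (fX w) \<partial>F)"
      unfolding A setint_pre[OF \<open>B \<in> sets M\<close>] .
  next
    show "integrable F (\<lambda>w. of_bool (fA w)::real)"
      by (rule bnd_integrable[where c=1]) (use F.finite_measure_axioms in auto)
    show "integrable F (\<lambda>w. ec (fX w))"
      by (rule bnd_integrable[where c=1]) (use F.finite_measure_axioms in auto)
    show "(\<lambda>w. ec (fX w)) \<in> borel_measurable (vimage_algebra (space F) fX M)"
      by (rule measurable_compose[OF measurable_vimage_algebra1[OF sp]]) measurable
  qed
qed

lemma sX_meas: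
  assumes "g \<in> borel_measurable M"
  shows "(\<lambda>w. g (fX w)) \<in> borel_measurable (vimage_algebra (space F) fX M)"
  by (rule measurable_compose[OF measurable_vimage_algebra1 assms])
     (use measurable_space[OF fX_measF] in auto)

lemma U:
  assumes C[measurable]: "C \<in> sets (M \<Otimes>\<^sub>M count_space UNIV)"
  shows "(\<integral>w. indicator C (fX w, pot w b) * of_bool (fA w) \<partial>F) = (\<integral>w. indicator C (fX w, pot w b) * ec (fX w) \<partial>F)"
proof -
  let ?G = "vimage_algebra (space F) (\<lambda>w. (fX w, pot w b)) (M \<Otimes>\<^sub>M count_space UNIV)"
  let ?H = "vimage_algebra (space F) fX M"
  interpret SY: finite_measure_subalgebra F ?G
    by (rule fms_vimage) (simp_all add: F_prob)
  interpret SX: finite_measure_subalgebra F ?H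
    by (rule fms_vimage) (simp_all add: F_prob)
  have gm[measurable]: "(\<lambda>w. (fX w, pot w b)) \<in> measurable F (M \<Otimes>\<^sub>M count_space UNIV)" by measurable
  have g1: "(\<lambda>w. (fX w, pot w b)) \<in> measurable ?G (M \<Otimes>\<^sub>M count_space UNIV)"
    by (rule measurable_vimage_algebra1) (use measurable_space[OF gm] in auto)
  have hm: "(\<lambda>w. indicator C (fX w, pot w b) :: real) \<in> borel_measurable ?G"
    by (rule measurable_compose[OF g1]) measurable
  have int: "integrable F (\<lambda>w. indicator C (fX w, pot w b) * of_bool (fA w) :: real)"
    by (rule bnd_integrable[where c=1]) (use F.finite_measure_axioms in \<open>auto simp: indicator_def\<close>)
  have c2m[measurable]: "real_cond_exp F ?G (\<lambda>w. of_bool (fA w)) \<in> borel_measurable F"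
    by (rule borel_measurable_cond_exp2)
  have "(\<integral>w. indicator C (fX w, pot w b) * of_bool (fA w) \<partial>F)
     = (\<integral>w. indicator C (fX w, pot w b) * real_cond_exp F ?G (\<lambda>w. of_bool (fA w)) w \<partial>F)"
    by (rule SY.real_cond_exp_intg(2)[symmetric]) (use int hm in auto)
  also have "\<dots> = (\<integral>w. indicator C (fX w, pot w b) * ec (fX w) \<partial>F)"
  proof (rule int_cong_AE)
    have "AE w in F. real_cond_exp F ?H (\<lambda>w. of_bool (fA w)) w = real_cond_exp F ?G (\<lambda>w. of_bool (fA w)) w"
      using F_unc unfolding unconfounded_def by blast
    then show "AE w in F. indicator C (fX w, pot w b) * real_cond_exp F ?G (\<lambda>w. of_bool (fA w)) w =
        indicator C (fX w, pot w b) * ec (fX w)"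
      using c1_eq by eventually_elim simp
  qed measurable
  finally show ?thesis .
qed

lemma W:
  assumes B[measurable]: "B \<in> sets M"
  shows "(\<integral>w. indicator B (fX w) * eb (fX w) b * of_bool (pot w b) \<partial>F)
       = (\<integral>w. indicator B (fX w) * eb (fX w) b * mc (fX w) b \<partial>F)"
proof -
  have C[measurable]: "B \<times> {True} \<in> sets (M \<Otimes>\<^sub>M count_space UNIV)" by measurable
  have ind: "\<And>w. indicator (B \<times> {True}) (fX w, pot w b) = (indicator B (fX w) * of_bool (pot w b) :: real)"
    by (auto simp: indicator_def)
  have UB: "(\<integral>w. indicator B (fX w) * of_bool (pot w b) * of_bool (fA w) \<partial>F)
          = (\<integral>w. indicator B (fX w) * of_bool (pot w b) * ec (fX w) \<partial>F)"
    using U[OF C, of b] unfolding ind .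
  have s1: "(\<integral>w. indicator B (fX w) * eb (fX w) b * of_bool (pot w b) \<partial>F)
      = (\<integral>w. indicator B (fX w) * of_bool (pot w b) * of_bool (fA w = b) \<partial>F)"
  proof (cases b)
    case True
    then show ?thesis using UB by (simp add: eb_def ac_simps)
  next
    case False
    have i1: "integrable F (\<lambda>w. indicator B (fX w) * of_bool (pot w b) :: real)"
      by (rule bnd_integrable[where c=1]) (use F.finite_measure_axioms in auto)
    have i2: "integrable F (\<lambda>w. indicator B (fX w) * of_bool (pot w b) * of_bool (fA w) :: real)"
      by (rule bnd_integrable[where c=1]) (use F.finite_measure_axioms in auto)
    have i3: "integrable F (\<lambda>w. indicator B (fX w) * of_bool (pot w b) * ec (fX w) :: real)"
      by (rule bnd_integrable[where c=1]) (use F.finite_measure_axioms in \<open>auto simp: indicator_def\<close>)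
    have "(\<integral>w. indicator B (fX w) * eb (fX w) b * of_bool (pot w b) \<partial>F)
        = (\<integral>w. indicator B (fX w) * of_bool (pot w b) - indicator B (fX w) * of_bool (pot w b) * ec (fX w) \<partial>F)"
      using False by (intro Bochner_Integration.integral_cong) (auto simp: eb_def algebra_simps)
    also have "\<dots> = (\<integral>w. indicator B (fX w) * of_bool (pot w b) \<partial>F) - (\<integral>w. indicator B (fX w) * of_bool (pot w b) * ec (fX w) \<partial>F)"
      using i1 i3 by simp
    also have "\<dots> = (\<integral>w. indicator B (fX w) * of_bool (pot w b) \<partial>F) - (\<integral>w. indicator B (fX w) * of_bool (pot w b) * of_bool (fA w) \<partial>F)"
      using UB by simp
    also have "\<dots> = (\<integral>w. indicator B (fX w) * of_bool (pot w b) - indicator B (fX w) * of_bool (pot w b) * of_bool (fA w) \<partial>F)"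
      using i1 i2 by simp
    also have "\<dots> = (\<integral>w. indicator B (fX w) * of_bool (pot w b) * of_bool (fA w = b) \<partial>F)"
      using False by (intro Bochner_Integration.integral_cong) auto
    finally show ?thesis .
  qed
  also have "\<dots> = (\<integral>z. indicator B (oX z) * of_bool (oA z = b) * of_bool (oY z = True) \<partial>P)"
    by (subst Dist) (measurable, (intro Bochner_Integration.integral_cong; auto simp: pot_def)?)
  also have "\<dots> = (\<integral>z. indicator B (oX z) * mq (oX z) b True * eb (oX z) b \<partial>P)"
    by (rule atom_y) fact
  also have "\<dots> = (\<integral>w. indicator B (fX w) * eb (fX w) b * mc (fX w) b \<partial>F)"
    by (subst Dist) (measurable, (simp add: mq_def ac_simps)?)
  finally show ?thesis .
qed

lemma rmc: "AE w in F. real_cond_exp F (vimage_algebra (space F) fX M) (\<lambda>w. of_bool (pot w b)) w = mc (fX w) b"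
proof -
  let ?H = "vimage_algebra (space F) fX M"
  interpret SX: finite_measure_subalgebra F ?H
    by (rule fms_vimage) (simp_all add: F_prob)
  have sp: "fX \<in> space F \<rightarrow> space M" using measurable_space[OF fX_measF] by auto
  define r where "r = real_cond_exp F ?H (\<lambda>w. of_bool (pot w b))"
  have rH[measurable]: "r \<in> borel_measurable ?H" unfolding r_def by (rule borel_measurable_cond_exp)
  have rF[measurable]: "r \<in> borel_measurable F" unfolding r_def by (rule borel_measurable_cond_exp2)
  have ebH: "(\<lambda>w. eb (fX w) b) \<in> borel_measurable ?H" by (rule sX_meas) measurable
  have indH: "(\<lambda>w. indicator B' (fX w) :: real) \<in> borel_measurable ?H" if [measurable]: "B' \<in> sets M" for B'
    by (rule sX_meas) measurable
  have mcH: "(\<lambda>w. eb (fX w) b * mc (fX w) b) \<in> borel_measurable ?H" by (rule sX_meas) measurable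
  have ipe: "integrable F (\<lambda>w. eb (fX w) b * of_bool (pot w b))"
    by (rule bnd_integrable[where c=1]) (use F.finite_measure_axioms in auto)
  have key: "(\<integral>w. indicator B' (fX w) * (eb (fX w) b * of_bool (pot w b)) \<partial>F)
        = (\<integral>w. indicator B' (fX w) * (eb (fX w) b * r w) \<partial>F)" if [measurable]: "B' \<in> sets M" for B'
  proof -
    have i: "integrable F (\<lambda>w. (indicator B' (fX w) * eb (fX w) b) * of_bool (pot w b))"
      by (rule bnd_integrable[where c=1]) (use F.finite_measure_axioms in \<open>auto simp: indicator_def\<close>)
    have m: "(\<lambda>w. indicator B' (fX w) * eb (fX w) b) \<in> borel_measurable ?H"
      by (rule sX_meas) measurable
    have "(\<integral>w. (indicator B' (fX w) * eb (fX w) b) * r w \<partial>F) = (\<integral>w. (indicator B' (fX w) * eb (fX w) b) * of_bool (pot w b) \<partial>F)"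
      unfolding r_def by (rule SX.real_cond_exp_intg(2)) (use i m in auto)
    then show ?thesis by (simp add: ac_simps)
  qed
  have ieb_r: "integrable F (\<lambda>w. eb (fX w) b * r w)"
    unfolding r_def by (rule SX.real_cond_exp_intg(1)) (use ipe ebH in auto)
  have ch: "AE w in F. real_cond_exp F ?H (\<lambda>w. eb (fX w) b * mc (fX w) b) w = eb (fX w) b * r w"
  proof (rule SX.real_cond_exp_charact)
    fix A assume "A \<in> sets ?H"
    then obtain B' where hB: "B' \<in> sets M" and A: "A = fX -` B' \<inter> space F"
      unfolding sets_vimage_algebra2[OF sp] by auto
    note hB[measurable]
    have "(\<integral>w. indicator B' (fX w) * (eb (fX w) b * mc (fX w) b) \<partial>F)
        = (\<integral>w. indicator B' (fX w) * (eb (fX w) b * of_bool (pot w b)) \<partial>F)"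
      using W[OF hB, of b] by (simp add: ac_simps)
    also have "\<dots> = (\<integral>w. indicator B' (fX w) * (eb (fX w) b * r w) \<partial>F)" by (rule key) fact
    finally show "(\<integral>w\<in>A. eb (fX w) b * mc (fX w) b \<partial>F) = (\<integral>w\<in>A. eb (fX w) b * r w \<partial>F)"
      unfolding A setint_pre[OF hB] .
  next
    show "integrable F (\<lambda>w. eb (fX w) b * mc (fX w) b)"
      by (rule bnd_integrable[where c=1]) (use F.finite_measure_axioms in \<open>auto simp: abs_mult intro: mult_le_one\<close>)
    show "integrable F (\<lambda>w. eb (fX w) b * r w)" by (rule ieb_r)
    show "(\<lambda>w. eb (fX w) b * r w) \<in> borel_measurable ?H"
      using ebH rH by measurable
  qed
  have fm: "AE w in F. real_cond_exp F ?H (\<lambda>w. eb (fX w) b * mc (fX w) b) w = eb (fX w) b * mc (fX w) b"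
  proof (rule SX.real_cond_exp_F_meas[OF _ mcH])
    show "integrable F (\<lambda>w. eb (fX w) b * mc (fX w) b)"
      by (rule bnd_integrable[where c=1]) (use F.finite_measure_axioms mult_le_one[OF eb_bnd(2) clip01_bnd(1) clip01_bnd(2)] in \<open>auto simp: abs_mult\<close>)
  qed
  have "AE w in F. r w = mc (fX w) b"
    using ch fm AE_eF
  proof eventually_elim
    case (elim w)
    have "eb (fX w) b > 0" using elim(3) by (auto simp: eb_def)
    moreover have "eb (fX w) b * r w = eb (fX w) b * mc (fX w) b" using elim(1,2) by metis
    ultimately show ?case by auto
  qed
  then show ?thesis unfolding r_def .
qed

lemma Kg:
  assumes g[measurable]: "g \<in> borel_measurable M" and gb: "\<And>x. \<bar>g x\<bar> \<le> c"
  shows "(\<integral>w. g (fX w) * of_bool (pot w b) \<partial>F) = (\<integral>w. g (fX w) * mc (fX w) b \<partial>F)"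
proof -
  let ?H = "vimage_algebra (space F) fX M"
  interpret SX: finite_measure_subalgebra F ?H
    by (rule fms_vimage) (simp_all add: F_prob)
  have c0: "0 \<le> c" using abs_ge_zero[of "g undefined"] gb[of undefined] by linarith
  have i: "integrable F (\<lambda>w. g (fX w) * of_bool (pot w b))"
  proof (rule bnd_integrable[where c=c])
    fix w show "\<bar>g (fX w) * of_bool (pot w b)\<bar> \<le> c" using c0 gb[of "fX w"] by (cases "pot w b") auto
  qed (use F.finite_measure_axioms in auto)
  have gH: "(\<lambda>w. g (fX w)) \<in> borel_measurable ?H" by (rule sX_meas) measurable
  have "(\<integral>w. g (fX w) * real_cond_exp F ?H (\<lambda>w. of_bool (pot w b)) w \<partial>F) = (\<integral>w. g (fX w) * of_bool (pot w b) \<partial>F)"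
    by (rule SX.real_cond_exp_intg(2)) (use i gH in auto)
  moreover have "(\<integral>w. g (fX w) * real_cond_exp F ?H (\<lambda>w. of_bool (pot w b)) w \<partial>F) = (\<integral>w. g (fX w) * mc (fX w) b \<partial>F)"
  proof (rule int_cong_AE)
    show "AE w in F. g (fX w) * real_cond_exp F ?H (\<lambda>w. of_bool (pot w b)) w = g (fX w) * mc (fX w) b"
      using rmc[of b] by eventually_elim simp
    show "(\<lambda>w. g (fX w) * real_cond_exp F ?H (\<lambda>w. of_bool (pot w b)) w) \<in> borel_measurable F"
      using borel_measurable_cond_exp2 by measurable
  qed measurable
  ultimately show ?thesis by simp
qed

lemma LF:
  assumes [measurable]: "h \<in> borel_measurable M" "g0 \<in> borel_measurable M" "g1 \<in> borel_measurable M"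
    and hb: "\<And>x. \<bar>h x\<bar> \<le> c" and g0b: "\<And>x. \<bar>g0 x\<bar> \<le> c" and g1b: "\<And>x. \<bar>g1 x\<bar> \<le> c"
  shows "(\<integral>w. h (fX w) + g0 (fX w) * of_bool (pot w False) + g1 (fX w) * of_bool (pot w True) \<partial>F)
       = (\<integral>z. h (oX z) + g0 (oX z) * mc (oX z) False + g1 (oX z) * mc (oX z) True \<partial>P)"
proof -
  have c0: "0 \<le> c" using abs_ge_zero[of "h undefined"] hb[of undefined] by linarith
  have bnd: "\<bar>g (fX w) * q\<bar> \<le> c" if "\<And>x. \<bar>g x\<bar> \<le> c" "0 \<le> q" "q \<le> 1" for g :: "'x \<Rightarrow> real" and w q
  proof -
    have "\<bar>g (fX w) * q\<bar> = \<bar>g (fX w)\<bar> * q" using that by (simp add: abs_mult)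
    also have "\<dots> \<le> c * 1" using that(1)[of "fX w"] that(2,3) c0 by (intro mult_mono) auto
    finally show ?thesis by simp
  qed
  have ih: "integrable F (\<lambda>w. h (fX w))"
    by (rule bnd_integrable[where c=c]) (use F.finite_measure_axioms hb in auto)
  have ig: "integrable F (\<lambda>w. g (fX w) * of_bool (pot w b))" if [measurable]: "g \<in> borel_measurable M" "\<And>x. \<bar>g x\<bar> \<le> c" for g b
  proof (rule bnd_integrable[where c=c])
    fix w show "\<bar>g (fX w) * of_bool (pot w b)\<bar> \<le> c" using that(2)[of "fX w"] c0 by (cases "pot w b") auto
  qed (use F.finite_measure_axioms in auto)
  have igm: "integrable F (\<lambda>w. g (fX w) * mc (fX w) b)" if [measurable]: "g \<in> borel_measurable M" "\<And>x. \<bar>g x\<bar> \<le> c" for g b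
  proof (rule bnd_integrable[where c=c])
    fix w show "\<bar>g (fX w) * mc (fX w) b\<bar> \<le> c" by (rule bnd_mult01) (use that(2) in auto)
  qed (use F.finite_measure_axioms in auto)
  have "(\<integral>w. h (fX w) + g0 (fX w) * of_bool (pot w False) + g1 (fX w) * of_bool (pot w True) \<partial>F)
      = (\<integral>w. h (fX w) \<partial>F) + (\<integral>w. g0 (fX w) * of_bool (pot w False) \<partial>F) + (\<integral>w. g1 (fX w) * of_bool (pot w True) \<partial>F)"
    using ih ig[OF assms(2) g0b] ig[OF assms(3) g1b] by simp
  also have "\<dots> = (\<integral>w. h (fX w) \<partial>F) + (\<integral>w. g0 (fX w) * mc (fX w) False \<partial>F) + (\<integral>w. g1 (fX w) * mc (fX w) True \<partial>F)"
    using Kg[OF assms(2) g0b] Kg[OF assms(3) g1b] by simp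
  also have "\<dots> = (\<integral>w. h (fX w) + g0 (fX w) * mc (fX w) False + g1 (fX w) * mc (fX w) True \<partial>F)"
    using ih igm[OF assms(2) g0b] igm[OF assms(3) g1b] by simp
  also have "\<dots> = (\<integral>z. h (oX z) + g0 (oX z) * mc (oX z) False + g1 (oX z) * mc (oX z) True \<partial>P)"
    by (subst Dist) (measurable, simp?)
  finally show ?thesis .
qed

lemma FNA_int:
  assumes [measurable]: "\<pi>0 \<in> M \<rightarrow>\<^sub>M count_space UNIV" "\<pi>1 \<in> M \<rightarrow>\<^sub>M count_space UNIV"
  shows "FNA \<pi>0 \<pi>1 F = (\<integral>w. of_bool (pot w (\<pi>0 (fX w)) \<and> \<not> pot w (\<pi>1 (fX w))) \<partial>F)"
    and "integrable F (\<lambda>w. of_bool (pot w (\<pi>0 (fX w)) \<and> \<not> pot w (\<pi>1 (fX w))) :: real)"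
proof -
  have [measurable]: "Measurable.pred F (\<lambda>w. pot w (\<pi>0 (fX w)) \<and> \<not> pot w (\<pi>1 (fX w)))"
    by (subst (1 2) pot_split) measurable
  show "FNA \<pi>0 \<pi>1 F = (\<integral>w. of_bool (pot w (\<pi>0 (fX w)) \<and> \<not> pot w (\<pi>1 (fX w))) \<partial>F)"
  proof -
    let ?S = "{w \<in> space F. pot w (\<pi>0 (fX w)) \<and> \<not> pot w (\<pi>1 (fX w))}"
    have "(\<integral>w. of_bool (pot w (\<pi>0 (fX w)) \<and> \<not> pot w (\<pi>1 (fX w))) \<partial>F) = (\<integral>w. indicator ?S w \<partial>F)"
      by (intro Bochner_Integration.integral_cong) (auto simp: indicator_def)
    also have "\<dots> = measure F ?S" by (simp add: Int_absorb2)
    finally show ?thesis unfolding FNA_def by simp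
  qed
  show "integrable F (\<lambda>w. of_bool (pot w (\<pi>0 (fX w)) \<and> \<not> pot w (\<pi>1 (fX w))) :: real)"
    by (rule bnd_integrable[where c=1]) (use F.finite_measure_axioms in auto)
qed

lemma FNA_lower:
  assumes [measurable]: "\<pi>0 \<in> M \<rightarrow>\<^sub>M count_space UNIV" "\<pi>1 \<in> M \<rightarrow>\<^sub>M count_space UNIV"
  shows "(\<integral>z. Lc \<pi>0 \<pi>1 (oX z) \<partial>P) \<le> FNA \<pi>0 \<pi>1 F"
proof -
  define D01 where "D01 = {x\<in>space M. \<not> \<pi>0 x \<and> \<pi>1 x \<and> mc x True \<le> mc x False}"
  define D10 where "D10 = {x\<in>space M. \<pi>0 x \<and> \<not> \<pi>1 x \<and> mc x False \<le> mc x True}"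
  have [measurable]: "D01 \<in> sets M" "D10 \<in> sets M" unfolding D01_def D10_def by measurable
  define g0 where "g0 x = (indicator D01 x - indicator D10 x :: real)" for x
  define g1 where "g1 x = (indicator D10 x - indicator D01 x :: real)" for x
  have [measurable]: "g0 \<in> borel_measurable M" "g1 \<in> borel_measurable M" unfolding g0_def g1_def by measurable
  have gb: "\<bar>g0 x\<bar> \<le> 1" "\<bar>g1 x\<bar> \<le> 1" for x
    unfolding g0_def g1_def D01_def D10_def by (auto simp: indicator_def)
  have LF': "(\<integral>w. (\<lambda>x. 0) (fX w) + g0 (fX w) * of_bool (pot w False) + g1 (fX w) * of_bool (pot w True) \<partial>F)
       = (\<integral>z. (\<lambda>x. 0) (oX z) + g0 (oX z) * mc (oX z) False + g1 (oX z) * mc (oX z) True \<partial>P)"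
    by (rule LF[where c=1]) (use gb in auto)
  have "(\<integral>z. Lc \<pi>0 \<pi>1 (oX z) \<partial>P) = (\<integral>z. 0 + g0 (oX z) * mc (oX z) False + g1 (oX z) * mc (oX z) True \<partial>P)"
  proof (intro Bochner_Integration.integral_cong refl)
    fix z assume "z \<in> space P"
    then have "oX z \<in> space M" using measurable_space[OF oX_meas] by auto
    then show "Lc \<pi>0 \<pi>1 (oX z) = 0 + g0 (oX z) * mc (oX z) False + g1 (oX z) * mc (oX z) True"
      unfolding Lc_def g0_def g1_def D01_def D10_def by (auto simp: indicator_def max_def)
  qed
  also have "\<dots> = (\<integral>w. 0 + g0 (fX w) * of_bool (pot w False) + g1 (fX w) * of_bool (pot w True) \<partial>F)"
    using LF' by simp
  also have "\<dots> \<le> (\<integral>w. of_bool (pot w (\<pi>0 (fX w)) \<and> \<not> pot w (\<pi>1 (fX w))) \<partial>F)"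
  proof (rule integral_mono)
    show "integrable F (\<lambda>w. 0 + g0 (fX w) * of_bool (pot w False) + g1 (fX w) * of_bool (pot w True))"
      by (rule bnd_integrable[where c=2]) (use F.finite_measure_axioms in \<open>auto simp: g0_def g1_def indicator_def\<close>)
    show "integrable F (\<lambda>w. of_bool (pot w (\<pi>0 (fX w)) \<and> \<not> pot w (\<pi>1 (fX w))) :: real)"
      by (rule FNA_int(2)) measurable
    fix w assume "w \<in> space F"
    show "0 + g0 (fX w) * of_bool (pot w False) + g1 (fX w) * of_bool (pot w True)
        \<le> of_bool (pot w (\<pi>0 (fX w)) \<and> \<not> pot w (\<pi>1 (fX w)))"
      by (subst (1 2) pot_split) (auto simp: g0_def g1_def D01_def D10_def indicator_def)
  qed
  also have "\<dots> = FNA \<pi>0 \<pi>1 F" by (rule FNA_int(1)[symmetric]) measurable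
  finally show ?thesis .
qed

lemma FNA_upper:
  assumes [measurable]: "\<pi>0 \<in> M \<rightarrow>\<^sub>M count_space UNIV" "\<pi>1 \<in> M \<rightarrow>\<^sub>M count_space UNIV"
  shows "FNA \<pi>0 \<pi>1 F \<le> (\<integral>z. Uc \<pi>0 \<pi>1 (oX z) \<partial>P)"
proof -
  define E01a where "E01a = {x\<in>space M. \<not> \<pi>0 x \<and> \<pi>1 x \<and> mc x False \<le> 1 - mc x True}"
  define E01b where "E01b = {x\<in>space M. \<not> \<pi>0 x \<and> \<pi>1 x \<and> \<not> mc x False \<le> 1 - mc x True}"
  define E10a where "E10a = {x\<in>space M. \<pi>0 x \<and> \<not> \<pi>1 x \<and> mc x True \<le> 1 - mc x False}"
  define E10b where "E10b = {x\<in>space M. \<pi>0 x \<and> \<not> \<pi>1 x \<and> \<not> mc x True \<le> 1 - mc x False}"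
  have [measurable]: "E01a \<in> sets M" "E01b \<in> sets M" "E10a \<in> sets M" "E10b \<in> sets M"
    unfolding E01a_def E01b_def E10a_def E10b_def by measurable
  define h where "h x = (indicator E01b x + indicator E10b x :: real)" for x
  define g0 where "g0 x = (indicator E01a x - indicator E10b x :: real)" for x
  define g1 where "g1 x = (indicator E10a x - indicator E01b x :: real)" for x
  have [measurable]: "h \<in> borel_measurable M" "g0 \<in> borel_measurable M" "g1 \<in> borel_measurable M"
    unfolding h_def g0_def g1_def by measurable
  have gb: "\<bar>h x\<bar> \<le> 2" "\<bar>g0 x\<bar> \<le> 2" "\<bar>g1 x\<bar> \<le> 2" for x
    unfolding h_def g0_def g1_def by (auto simp: indicator_def)
  have LF': "(\<integral>w. h (fX w) + g0 (fX w) * of_bool (pot w False) + g1 (fX w) * of_bool (pot w True) \<partial>F)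
       = (\<integral>z. h (oX z) + g0 (oX z) * mc (oX z) False + g1 (oX z) * mc (oX z) True \<partial>P)"
    by (rule LF[where c=2]) (use gb in auto)
  have "FNA \<pi>0 \<pi>1 F = (\<integral>w. of_bool (pot w (\<pi>0 (fX w)) \<and> \<not> pot w (\<pi>1 (fX w))) \<partial>F)"
    by (rule FNA_int(1)) measurable
  also have "\<dots> \<le> (\<integral>w. h (fX w) + g0 (fX w) * of_bool (pot w False) + g1 (fX w) * of_bool (pot w True) \<partial>F)"
  proof (rule integral_mono)
    show "integrable F (\<lambda>w. h (fX w) + g0 (fX w) * of_bool (pot w False) + g1 (fX w) * of_bool (pot w True))"
      by (rule bnd_integrable[where c=6]) (use F.finite_measure_axioms in \<open>auto simp: h_def g0_def g1_def indicator_def\<close>)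
    show "integrable F (\<lambda>w. of_bool (pot w (\<pi>0 (fX w)) \<and> \<not> pot w (\<pi>1 (fX w))) :: real)"
      by (rule FNA_int(2)) measurable
    fix w assume w: "w \<in> space F"
    then have "fX w \<in> space M" using measurable_space[OF fX_measF] by auto
    then show "of_bool (pot w (\<pi>0 (fX w)) \<and> \<not> pot w (\<pi>1 (fX w)))
        \<le> h (fX w) + g0 (fX w) * of_bool (pot w False) + g1 (fX w) * of_bool (pot w True)"
      by (subst (1 2) pot_split) (auto simp: h_def g0_def g1_def E01a_def E01b_def E10a_def E10b_def indicator_def)
  qed
  also have "\<dots> = (\<integral>z. h (oX z) + g0 (oX z) * mc (oX z) False + g1 (oX z) * mc (oX z) True \<partial>P)"
    by (rule LF')
  also have "\<dots> = (\<integral>z. Uc \<pi>0 \<pi>1 (oX z) \<partial>P)"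
  proof (intro Bochner_Integration.integral_cong refl)
    fix z assume "z \<in> space P"
    then have "oX z \<in> space M" using measurable_space[OF oX_meas] by auto
    then show "h (oX z) + g0 (oX z) * mc (oX z) False + g1 (oX z) * mc (oX z) True = Uc \<pi>0 \<pi>1 (oX z)"
      unfolding Uc_def h_def g0_def g1_def E01a_def E01b_def E10a_def E10b_def by (auto simp: indicator_def min_def)
  qed
  finally show ?thesis .
qed

end

context obs_setting
begin

interpretation P: prob_space P by (rule P_prob)


lemma Pgen:
  assumes [measurable]: "a \<in> sets M"
  shows "(\<integral>z. indicator a (oX z) * \<kappa> (oA z, oY z) \<partial>P)
       = (\<integral>z. indicator a (oX z) * (\<Sum>s\<in>UNIV. \<kappa> s * mq (oX z) (fst s) (snd s) * eb (oX z) (fst s)) \<partial>P)"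
proof -
  have i1: "integrable P (\<lambda>z. indicator a (oX z) * of_bool (oA z = fst s) * of_bool (oY z = snd s) :: real)" for s
    by (rule bnd_integrable[where c=1]) (use P.finite_measure_axioms in auto)
  have i2: "integrable P (\<lambda>z. indicator a (oX z) * mq (oX z) (fst s) (snd s) * eb (oX z) (fst s))" for s
  proof (rule bnd_integrable[where c=1])
    fix z show "\<bar>indicator a (oX z) * mq (oX z) (fst s) (snd s) * eb (oX z) (fst s)\<bar> \<le> 1"
      by (auto simp: indicator_def mq_def abs_mult intro!: mult_le_one)
  qed (use P.finite_measure_axioms in auto)
  have "(\<integral>z. indicator a (oX z) * \<kappa> (oA z, oY z) \<partial>P)
      = (\<integral>z. (\<Sum>s\<in>UNIV. \<kappa> s * (indicator a (oX z) * of_bool (oA z = fst s) * of_bool (oY z = snd s))) \<partial>P)"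
    by (intro Bochner_Integration.integral_cong refl) (auto simp: sum_UNIV2)
  also have "\<dots> = (\<Sum>s\<in>UNIV. \<kappa> s * (\<integral>z. indicator a (oX z) * of_bool (oA z = fst s) * of_bool (oY z = snd s) \<partial>P))"
    by (subst Bochner_Integration.integral_sum) (use i1 in auto)
  also have "\<dots> = (\<Sum>s\<in>UNIV. \<kappa> s * (\<integral>z. indicator a (oX z) * mq (oX z) (fst s) (snd s) * eb (oX z) (fst s) \<partial>P))"
    by (simp add: atom_y)
  also have "\<dots> = (\<integral>z. (\<Sum>s\<in>UNIV. \<kappa> s * (indicator a (oX z) * mq (oX z) (fst s) (snd s) * eb (oX z) (fst s))) \<partial>P)"
    by (subst Bochner_Integration.integral_sum) (use i2 in auto)
  also have "\<dots> = (\<integral>z. indicator a (oX z) * (\<Sum>s\<in>UNIV. \<kappa> s * mq (oX z) (fst s) (snd s) * eb (oX z) (fst s)) \<partial>P)"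
    by (intro Bochner_Integration.integral_cong refl) (simp add: sum_distrib_left ac_simps)
  finally show ?thesis .
qed

definition Q :: "'x measure" where "Q = distr P M oX"

definition p11 :: "real \<Rightarrow> 'x \<Rightarrow> real" where
  "p11 l x = (1 - l) * min (mc x False) (mc x True) + l * max 0 (mc x False + mc x True - 1)"
definition pj :: "real \<Rightarrow> 'x \<Rightarrow> bool \<Rightarrow> bool \<Rightarrow> real" where
  "pj l x y0 y1 = (if y0 then (if y1 then p11 l x else mc x False - p11 l x)
                   else (if y1 then mc x True - p11 l x else 1 - mc x False - mc x True + p11 l x))"
definition rho :: "real \<Rightarrow> 'x \<times> bool \<times> bool \<times> bool \<Rightarrow> real" where
  "rho l z = eb (fst z) (fst (snd z)) * pj l (fst z) (fst (snd (snd z))) (snd (snd (snd z)))"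

lemma p11_bnds:
  assumes "0 \<le> l" "l \<le> 1"
  shows "max 0 (mc x False + mc x True - 1) \<le> p11 l x" "p11 l x \<le> min (mc x False) (mc x True)"
proof -
  let ?lo = "max 0 (mc x False + mc x True - 1)" and ?hi = "min (mc x False) (mc x True)"
  have lh: "?lo \<le> ?hi" using clip01_bnd[of "\<mu> x False"] clip01_bnd[of "\<mu> x True"] by linarith
  have "p11 l x - ?lo = (1 - l) * (?hi - ?lo)" unfolding p11_def by (simp add: algebra_simps)
  moreover have "(1 - l) * (?hi - ?lo) \<ge> 0" using assms lh by simp
  ultimately show "?lo \<le> p11 l x" by linarith
  have "?hi - p11 l x = l * (?hi - ?lo)" unfolding p11_def by (simp add: algebra_simps)
  moreover have "l * (?hi - ?lo) \<ge> 0" using assms lh by simp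
  ultimately show "p11 l x \<le> ?hi" by linarith
qed

lemma pj_nonneg:
  assumes "0 \<le> l" "l \<le> 1"
  shows "0 \<le> pj l x y0 y1"
  using p11_bnds[OF assms, of x] unfolding pj_def by (auto split: if_splits)

lemma rho_nonneg:
  assumes "0 \<le> l" "l \<le> 1"
  shows "0 \<le> rho l z"
  unfolding rho_def using pj_nonneg[OF assms] by simp

lemma rho_sum: "(\<Sum>t\<in>UNIV. rho l (x, t)) = 1"
  unfolding rho_def sum_UNIV3 by (simp add: pj_def eb_def algebra_simps)

lemma p11_meas[measurable]: "p11 l \<in> borel_measurable M"
  unfolding p11_def by measurable
lemma pj_meas[measurable]: "(\<lambda>x. pj l x y0 y1) \<in> borel_measurable M"
  unfolding pj_def by measurable
lemma rho_meas[measurable]: "rho l \<in> borel_measurable (M \<Otimes>\<^sub>M count_space UNIV)"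
proof -
  have "rho l = (\<lambda>z. (\<lambda>t x. eb x (fst t) * pj l x (fst (snd t)) (snd (snd t))) (snd z) (fst z))"
    by (auto simp: rho_def fun_eq_iff)
  moreover have "(\<lambda>z. (\<lambda>t x. eb x (fst t) * pj l x (fst (snd t)) (snd (snd t))) (snd z) (fst z))
    \<in> borel_measurable (M \<Otimes>\<^sub>M count_space UNIV)"
    by (rule measurable_compose_countable'[where I=UNIV]) auto
  ultimately show ?thesis by simp
qed

end


locale csetting = obs_setting M P e \<mu> for M :: "'x measure" and P e \<mu> +
  fixes l :: real
  assumes l0: "0 \<le> l" and l1: "l \<le> 1"
begin

interpretation P: prob_space P by (rule P_prob)

definition Fc :: "'x full measure" where
  "Fc = density (Q \<Otimes>\<^sub>M count_space UNIV) (\<lambda>z. ennreal (rho l z))"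

lemma sets_Q: "sets Q = sets M" unfolding Q_def by simp
lemma Q_prob: "prob_space Q" unfolding Q_def by (rule P.prob_space_distr) simp

lemma sets_Qc: "sets (Q \<Otimes>\<^sub>M count_space UNIV) = sets (M \<Otimes>\<^sub>M count_space UNIV)"
  by (rule sets_pair_measure_cong[OF sets_Q refl])
lemma sets_Fc: "sets Fc = sets (M \<Otimes>\<^sub>M count_space UNIV)"
  unfolding Fc_def by (simp add: sets_Qc)
lemma space_Fc: "space Fc = space (M \<Otimes>\<^sub>M count_space UNIV)"
  using sets_eq_imp_space_eq[OF sets_Fc] .
lemma measFc: "measurable Fc N = measurable (M \<Otimes>\<^sub>M count_space UNIV) N"
  by (rule measurable_cong_sets) (simp_all add: sets_Fc)
lemma measQc: "measurable (Q \<Otimes>\<^sub>M count_space UNIV) N = measurable (M \<Otimes>\<^sub>M count_space UNIV) N"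
  by (rule measurable_cong_sets) (simp_all add: sets_Qc)

lemma nnFUB:
  assumes g: "g \<in> borel_measurable (M \<Otimes>\<^sub>M count_space UNIV)"
  shows "(\<integral>\<^sup>+ w. g w \<partial>Fc) = (\<integral>\<^sup>+ x. (\<Sum>t\<in>UNIV. ennreal (rho l (x, t)) * g (x, t)) \<partial>Q)"
proof -
  interpret C: sigma_finite_measure "count_space (UNIV :: (bool \<times> bool \<times> bool) set)"
    by (rule sigma_finite_measure_count_space_finite) simp
  have gm: "g \<in> borel_measurable (Q \<Otimes>\<^sub>M count_space UNIV)" using g by (simp add: measQc)
  have rm: "(\<lambda>z. ennreal (rho l z)) \<in> borel_measurable (Q \<Otimes>\<^sub>M count_space UNIV)"
    unfolding measQc by measurable
  have "(\<integral>\<^sup>+ w. g w \<partial>Fc) = (\<integral>\<^sup>+ z. ennreal (rho l z) * g z \<partial>(Q \<Otimes>\<^sub>M count_space UNIV))"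
    unfolding Fc_def by (rule nn_integral_density[OF rm gm])
  also have "\<dots> = (\<integral>\<^sup>+ x. \<integral>\<^sup>+ t. ennreal (rho l (x, t)) * g (x, t) \<partial>count_space UNIV \<partial>Q)"
    by (rule C.nn_integral_fst[symmetric]) (use rm gm in measurable)
  also have "\<dots> = (\<integral>\<^sup>+ x. (\<Sum>t\<in>UNIV. ennreal (rho l (x, t)) * g (x, t)) \<partial>Q)"
    by (simp add: nn_integral_count_space_finite)
  finally show ?thesis .
qed

lemma Fc_prob: "prob_space Fc"
proof (rule prob_spaceI)
  have "emeasure Fc (space Fc) = (\<integral>\<^sup>+ w. 1 \<partial>Fc)" by simp
  also have "\<dots> = (\<integral>\<^sup>+ x. (\<Sum>t\<in>UNIV. ennreal (rho l (x, t)) * 1) \<partial>Q)"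
    by (rule nnFUB) simp
  also have "\<dots> = (\<integral>\<^sup>+ x. 1 \<partial>Q)"
    using rho_nonneg[OF l0 l1] by (simp add: rho_sum)
  also have "\<dots> = 1" using prob_space.emeasure_space_1[OF Q_prob] by simp
  finally show "emeasure Fc (space Fc) = 1" .
qed

interpretation Fc: prob_space Fc by (rule Fc_prob)

lemma FUB:
  fixes g :: "'x full \<Rightarrow> real"
  assumes g[measurable]: "g \<in> borel_measurable (M \<Otimes>\<^sub>M count_space UNIV)" and gn: "\<And>w. 0 \<le> g w"
  shows "(\<integral>w. g w \<partial>Fc) = (\<integral>z. (\<Sum>t\<in>UNIV. rho l (oX z, t) * g (oX z, t)) \<partial>P)"
proof -
  have gF: "g \<in> borel_measurable Fc" unfolding measFc by (rule g)
  have sm[measurable]: "(\<lambda>x. \<Sum>t\<in>UNIV. rho l (x, t) * g (x, t)) \<in> borel_measurable M"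
    by measurable
  have "(\<integral>w. g w \<partial>Fc) = enn2real (\<integral>\<^sup>+ w. ennreal (g w) \<partial>Fc)"
    by (rule integral_eq_nn_integral) (use gF gn in auto)
  also have "(\<integral>\<^sup>+ w. ennreal (g w) \<partial>Fc) = (\<integral>\<^sup>+ x. (\<Sum>t\<in>UNIV. ennreal (rho l (x, t)) * ennreal (g (x, t))) \<partial>Q)"
    by (rule nnFUB) measurable
  also have "\<dots> = (\<integral>\<^sup>+ x. ennreal (\<Sum>t\<in>UNIV. rho l (x, t) * g (x, t)) \<partial>Q)"
    using rho_nonneg[OF l0 l1] gn by (simp add: ennreal_mult[symmetric] sum_nonneg)
  also have "enn2real \<dots> = (\<integral>x. (\<Sum>t\<in>UNIV. rho l (x, t) * g (x, t)) \<partial>Q)"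
    by (rule integral_eq_nn_integral[symmetric])
       (use rho_nonneg[OF l0 l1] gn measurable_cong_sets[OF sets_Q refl, of borel] sm in \<open>auto intro!: sum_nonneg\<close>)
  also have "\<dots> = (\<integral>z. (\<Sum>t\<in>UNIV. rho l (oX z, t) * g (oX z, t)) \<partial>P)"
    unfolding Q_def by (rule integral_distr) measurable
  finally show ?thesis .
qed


lemma coarsen_measFc: "coarsen \<in> measurable Fc (obs_space M)"
  unfolding measFc obs_space_eq by (rule coarsen_meas_gen)

lemma rho_pointwise_obs:
  "(\<Sum>t\<in>UNIV. rho l (x, t) * (c * \<kappa> (fst t, pot (x, t) (fst t))))
   = c * (\<Sum>s\<in>UNIV. \<kappa> s * mq x (fst s) (snd s) * eb x (fst s))"
  unfolding sum_UNIV3 sum_UNIV2 rho_def pj_def mq_def pot_def by (simp add: algebra_simps)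

lemma Fc_distr: "distr Fc (obs_space M) coarsen = P"
proof -
  let ?E = "{a \<times> b | a b. a \<in> sets M \<and> b \<in> sets (count_space (UNIV :: (bool \<times> bool) set))}"
  let ?\<Omega> = "space M \<times> space (count_space (UNIV :: (bool \<times> bool) set))"
  have sE: "sets (M \<Otimes>\<^sub>M count_space UNIV) = sigma_sets ?\<Omega> ?E" by (rule sets_pair_measure)
  interpret D: prob_space "distr Fc (obs_space M) coarsen"
    by (rule Fc.prob_space_distr[OF coarsen_measFc])
  show ?thesis
  proof (rule measure_eqI_generator_eq[where E="?E" and \<Omega>="?\<Omega>" and A="\<lambda>_. ?\<Omega>"])
    show "Int_stable ?E" by (rule Int_stable_pair_measure_generator)
    show "?E \<subseteq> Pow ?\<Omega>" by (rule pair_measure_closed)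
    show "sets (distr Fc (obs_space M) coarsen) = sigma_sets ?\<Omega> ?E" using sE by (simp add: obs_space_eq)
    show "sets P = sigma_sets ?\<Omega> ?E" using sE by (simp add: obs_space_eq P_sets)
    show "range (\<lambda>_. ?\<Omega>) \<subseteq> ?E" by auto
    show "(\<Union>i. ?\<Omega>) = ?\<Omega>" by simp
    show "emeasure (distr Fc (obs_space M) coarsen) ?\<Omega> \<noteq> \<infinity>" for i :: nat by simp
  next
    fix X assume "X \<in> ?E"
    then obtain a b where ab: "X = a \<times> b" and ha: "a \<in> sets M" by auto
    note ha[measurable]
    have Xs: "X \<in> sets (obs_space M)" unfolding ab obs_space_eq by measurable
    have bm[measurable]: "(\<lambda>w. indicator b (fA w, pot w (fA w)) :: real) \<in> borel_measurable (M \<Otimes>\<^sub>M count_space UNIV)"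
      using snd_any_meas[of "\<lambda>t. indicator b (fst t, if fst t then snd (snd t) else fst (snd t))" M]
      by (simp add: fA_def pot_def)
    have "measure Fc (coarsen -` X \<inter> space Fc) = (\<integral>w. indicator (coarsen -` X \<inter> space Fc) w \<partial>Fc)"
      by (simp add: Int_absorb2)
    also have "\<dots> = (\<integral>w. indicator a (fX w) * indicator b (fA w, pot w (fA w)) \<partial>Fc)"
      by (intro Bochner_Integration.integral_cong refl) (auto simp: ab indicator_def coarsen_def)
    also have "\<dots> = (\<integral>z. (\<Sum>t\<in>UNIV. rho l (oX z, t) * (indicator a (fX (oX z, t)) * indicator b (fA (oX z, t), pot (oX z, t) (fA (oX z, t))))) \<partial>P)"
    proof (rule FUB)
      show "(\<lambda>w. indicator a (fX w) * indicator b (fA w, pot w (fA w)) :: real) \<in> borel_measurable (M \<Otimes>\<^sub>M count_space UNIV)"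
        by (intro borel_measurable_times bm) measurable
    qed (auto simp: indicator_def)
    also have "\<dots> = (\<integral>z. indicator a (oX z) * (\<Sum>s\<in>UNIV. indicator b s * mq (oX z) (fst s) (snd s) * eb (oX z) (fst s)) \<partial>P)"
      by (intro Bochner_Integration.integral_cong refl)
         (simp add: fX_def fA_def rho_pointwise_obs[where \<kappa>="indicator b"])
    also have "\<dots> = (\<integral>z. indicator a (oX z) * indicator b (oA z, oY z) \<partial>P)"
      by (rule Pgen[symmetric]) fact
    also have "\<dots> = (\<integral>z. indicator X z \<partial>P)"
      by (intro Bochner_Integration.integral_cong refl) (auto simp: ab indicator_def oX_def oA_def oY_def)
    also have "\<dots> = measure P X"
      using Xs P_sets by (simp add: Int_absorb2 sets.sets_into_space)
    finally have eqm: "measure Fc (coarsen -` X \<inter> space Fc) = measure P X" .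
    show "emeasure (distr Fc (obs_space M) coarsen) X = emeasure P X"
      using eqm Xs
      by (simp add: emeasure_distr[OF coarsen_measFc] Fc.emeasure_eq_measure P.emeasure_eq_measure)
  qed
qed


lemma Gc:
  assumes C[measurable]: "C \<in> sets (M \<Otimes>\<^sub>M count_space UNIV)"
  shows "(\<integral>w. indicator C (fX w, pot w b) * of_bool (fA w) \<partial>Fc) = (\<integral>w. indicator C (fX w, pot w b) * ec (fX w) \<partial>Fc)"
proof -
  have im[measurable]: "(\<lambda>w. indicator C (fX w, pot w b) :: real) \<in> borel_measurable (M \<Otimes>\<^sub>M count_space UNIV)"
    by (rule measurable_compose[OF pair_pot_meas]) (rule borel_measurable_indicator[OF C])
  have "(\<integral>w. indicator C (fX w, pot w b) * of_bool (fA w) \<partial>Fc)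
      = (\<integral>z. (\<Sum>t\<in>UNIV. rho l (oX z, t) * (indicator C (fX (oX z, t), pot (oX z, t) b) * of_bool (fA (oX z, t)))) \<partial>P)"
  proof (rule FUB)
    show "(\<lambda>w. indicator C (fX w, pot w b) * of_bool (fA w) :: real) \<in> borel_measurable (M \<Otimes>\<^sub>M count_space UNIV)"
      by (intro borel_measurable_times im) measurable
    fix w show "0 \<le> indicator C (fX w, pot w b) * (of_bool (fA w) :: real)" by (simp add: indicator_def)
  qed
  also have "\<dots> = (\<integral>z. (\<Sum>t\<in>UNIV. rho l (oX z, t) * (indicator C (fX (oX z, t), pot (oX z, t) b) * ec (fX (oX z, t)))) \<partial>P)"
  proof (intro Bochner_Integration.integral_cong refl)
    fix z
    show "(\<Sum>t\<in>UNIV. rho l (oX z, t) * (indicator C (fX (oX z, t), pot (oX z, t) b) * of_bool (fA (oX z, t)))) =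
          (\<Sum>t\<in>UNIV. rho l (oX z, t) * (indicator C (fX (oX z, t), pot (oX z, t) b) * ec (fX (oX z, t))))"
      unfolding sum_UNIV3 rho_def pj_def eb_def pot_def fX_def fA_def
      by (cases b) (simp_all add: algebra_simps)
  qed
  also have "\<dots> = (\<integral>w. indicator C (fX w, pot w b) * ec (fX w) \<partial>Fc)"
  proof (rule FUB[symmetric])
    show "(\<lambda>w. indicator C (fX w, pot w b) * ec (fX w)) \<in> borel_measurable (M \<Otimes>\<^sub>M count_space UNIV)"
      by (intro borel_measurable_times im) measurable
    fix w show "0 \<le> indicator C (fX w, pot w b) * ec (fX w)" by (simp add: indicator_def)
  qed
  finally show ?thesis .
qed

lemma cond_ec:
  assumes phim[measurable]: "\<phi> \<in> measurable Fc N"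
    and H: "\<And>C. C \<in> sets N \<Longrightarrow> (\<integral>w. indicator C (\<phi> w) * of_bool (fA w) \<partial>Fc) = (\<integral>w. indicator C (\<phi> w) * ec (fX w) \<partial>Fc)"
    and em: "(\<lambda>w. ec (fX w)) \<in> borel_measurable (vimage_algebra (space Fc) \<phi> N)"
  shows "AE w in Fc. real_cond_exp Fc (vimage_algebra (space Fc) \<phi> N) (\<lambda>w. of_bool (fA w)) w = ec (fX w)"
proof -
  interpret SV: finite_measure_subalgebra Fc "vimage_algebra (space Fc) \<phi> N"
    by (rule fms_vimage) (simp_all add: Fc_prob)
  have sp: "\<phi> \<in> space Fc \<rightarrow> space N" using measurable_space[OF phim] by auto
  have [measurable]: "fX \<in> measurable Fc M" unfolding measFc by simp
  have [measurable]: "Measurable.pred Fc fA" unfolding measFc by simp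
  show ?thesis
  proof (rule SV.real_cond_exp_charact)
    fix A assume "A \<in> sets (vimage_algebra (space Fc) \<phi> N)"
    then obtain C where hC: "C \<in> sets N" and A: "A = \<phi> -` C \<inter> space Fc"
      unfolding sets_vimage_algebra2[OF sp] by auto
    have eq: "(\<integral>w\<in>A. f w \<partial>Fc) = (\<integral>w. indicator C (\<phi> w) * f w \<partial>Fc)" for f :: "'x full \<Rightarrow> real"
      unfolding set_lebesgue_integral_def A
      by (intro Bochner_Integration.integral_cong) (auto simp: indicator_def)
    show "(\<integral>w\<in>A. of_bool (fA w) \<partial>Fc) = (\<integral>w\<in>A. ec (fX w) \<partial>Fc)"
      unfolding eq by (rule H[OF hC])
  next
    show "integrable Fc (\<lambda>w. of_bool (fA w) :: real)"
      by (rule bnd_integrable[where c=1]) (use Fc.finite_measure_axioms in auto)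
    show "integrable Fc (\<lambda>w. ec (fX w))"
      by (rule bnd_integrable[where c=1]) (use Fc.finite_measure_axioms in auto)
    show "(\<lambda>w. ec (fX w)) \<in> borel_measurable (vimage_algebra (space Fc) \<phi> N)" by (rule em)
  qed
qed

lemma Fc_unc: "unconfounded M Fc"
  unfolding unconfounded_def
proof
  fix b :: bool
  have [measurable]: "fX \<in> measurable Fc M" unfolding measFc by simp
  have pm[measurable]: "(\<lambda>w. (fX w, pot w b)) \<in> measurable Fc (M \<Otimes>\<^sub>M count_space UNIV)"
    unfolding measFc by measurable
  have c1: "AE w in Fc. real_cond_exp Fc (vimage_algebra (space Fc) fX M) (\<lambda>w. of_bool (fA w)) w = ec (fX w)"
  proof (rule cond_ec)
    show "fX \<in> measurable Fc M" by simp
    fix C assume hC[measurable]: "C \<in> sets M"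
    have "C \<times> UNIV \<in> sets (M \<Otimes>\<^sub>M count_space UNIV)" by measurable
    from Gc[OF this, of b] show "(\<integral>w. indicator C (fX w) * of_bool (fA w) \<partial>Fc) = (\<integral>w. indicator C (fX w) * ec (fX w) \<partial>Fc)"
      by (simp add: indicator_def)
  next
    show "(\<lambda>w. ec (fX w)) \<in> borel_measurable (vimage_algebra (space Fc) fX M)"
      by (rule measurable_compose[OF measurable_vimage_algebra1]) (use measurable_space[of fX Fc M] in auto)
  qed
  have c2: "AE w in Fc. real_cond_exp Fc (vimage_algebra (space Fc) (\<lambda>w. (fX w, pot w b)) (M \<Otimes>\<^sub>M count_space UNIV))
      (\<lambda>w. of_bool (fA w)) w = ec (fX w)"
  proof (rule cond_ec[OF pm])
    fix C :: "('x \<times> bool) set" assume hC: "C \<in> sets (M \<Otimes>\<^sub>M count_space UNIV)"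
    show "(\<integral>w. indicator C (fX w, pot w b) * of_bool (fA w) \<partial>Fc) = (\<integral>w. indicator C (fX w, pot w b) * ec (fX w) \<partial>Fc)"
      by (rule Gc[OF hC])
  next
    have g1: "(\<lambda>w. (fX w, pot w b)) \<in> measurable (vimage_algebra (space Fc) (\<lambda>w. (fX w, pot w b)) (M \<Otimes>\<^sub>M count_space UNIV)) (M \<Otimes>\<^sub>M count_space UNIV)"
      by (rule measurable_vimage_algebra1) (use measurable_space[OF pm] in auto)
    have "(\<lambda>w. ec (fst (fX w, pot w b))) \<in> borel_measurable (vimage_algebra (space Fc) (\<lambda>w. (fX w, pot w b)) (M \<Otimes>\<^sub>M count_space UNIV))"
      by (rule measurable_compose[OF g1]) measurable
    then show "(\<lambda>w. ec (fX w)) \<in> borel_measurable (vimage_algebra (space Fc) (\<lambda>w. (fX w, pot w b)) (M \<Otimes>\<^sub>M count_space UNIV))"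
      by simp
  qed
  show "AE w in Fc. real_cond_exp Fc (vimage_algebra (space Fc) fX M) (\<lambda>w. of_bool (fA w)) w =
      real_cond_exp Fc (vimage_algebra (space Fc) (\<lambda>w. (fX w, pot w b)) (M \<Otimes>\<^sub>M count_space UNIV))
       (\<lambda>w. of_bool (fA w)) w"
    using c1 c2 by eventually_elim simp
qed


lemma min_id1: "(a::real) - min a b = max (a - b) 0" by (simp add: min_def max_def)
lemma max_id1: "(a::real) - max 0 (a + b - 1) = min a (1 - b)" by (simp add: min_def max_def)

lemma FNA_pointwise:
  "(\<Sum>t\<in>UNIV. rho l (x, t) * of_bool (pot (x, t) (\<pi>0 x) \<and> \<not> pot (x, t) (\<pi>1 x)))
     = (1 - l) * Lc \<pi>0 \<pi>1 x + l * Uc \<pi>0 \<pi>1 x"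
proof -
  have S: "(\<Sum>t\<in>UNIV. rho l (x, t) * of_bool (pot (x, t) c0 \<and> \<not> pot (x, t) c1))
     = (if c0 = c1 then 0 else if c1 then pj l x True False else pj l x False True)" for c0 c1
    unfolding sum_UNIV3 rho_def pot_def eb_def by (cases c0; cases c1) (simp_all add: algebra_simps)
  show ?thesis
  proof (cases "\<pi>0 x"; cases "\<pi>1 x")
    assume "\<pi>0 x" "\<pi>1 x" then show ?thesis unfolding S Lc_def Uc_def by simp
  next
    assume "\<not> \<pi>0 x" "\<not> \<pi>1 x" then show ?thesis unfolding S Lc_def Uc_def by simp
  next
    assume a: "\<not> \<pi>0 x" "\<pi>1 x"
    have "pj l x True False = (1 - l) * (mc x False - min (mc x False) (mc x True))
          + l * (mc x False - max 0 (mc x False + mc x True - 1))"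
      unfolding pj_def p11_def by (simp add: algebra_simps)
    then show ?thesis using a unfolding S Lc_def Uc_def min_id1 max_id1 by (simp add: algebra_simps)
  next
    assume a: "\<pi>0 x" "\<not> \<pi>1 x"
    have "pj l x False True = (1 - l) * (mc x True - min (mc x True) (mc x False))
          + l * (mc x True - max 0 (mc x True + mc x False - 1))"
      unfolding pj_def p11_def by (simp add: algebra_simps min.commute)
    then show ?thesis using a unfolding S Lc_def Uc_def min_id1 max_id1 by (simp add: algebra_simps min.commute)
  qed
qed

lemma Fc_FNA:
  assumes [measurable]: "\<pi>0 \<in> M \<rightarrow>\<^sub>M count_space UNIV" "\<pi>1 \<in> M \<rightarrow>\<^sub>M count_space UNIV"
  shows "FNA \<pi>0 \<pi>1 Fc = (1 - l) * (\<integral>z. Lc \<pi>0 \<pi>1 (oX z) \<partial>P) + l * (\<integral>z. Uc \<pi>0 \<pi>1 (oX z) \<partial>P)"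
proof -
  let ?S = "{w \<in> space Fc. pot w (\<pi>0 (fX w)) \<and> \<not> pot w (\<pi>1 (fX w))}"
  have [measurable]: "Lc \<pi>0 \<pi>1 \<in> borel_measurable M" unfolding Lc_def by measurable
  have [measurable]: "Uc \<pi>0 \<pi>1 \<in> borel_measurable M" unfolding Uc_def by measurable
  have cm[measurable]: "Measurable.pred (M \<Otimes>\<^sub>M count_space UNIV) (\<lambda>w. pot w (\<pi>0 (fX w)) \<and> \<not> pot w (\<pi>1 (fX w)))"
    by (subst (1 2) pot_split) measurable
  have "FNA \<pi>0 \<pi>1 Fc = measure Fc ?S" unfolding FNA_def ..
  also have "\<dots> = (\<integral>w. indicator ?S w \<partial>Fc)" by (simp add: Int_absorb2)
  also have "\<dots> = (\<integral>w. of_bool (pot w (\<pi>0 (fX w)) \<and> \<not> pot w (\<pi>1 (fX w))) \<partial>Fc)"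
    by (intro Bochner_Integration.integral_cong) (auto simp: indicator_def)
  also have "\<dots> = (\<integral>z. (\<Sum>t\<in>UNIV. rho l (oX z, t) * of_bool (pot (oX z, t) (\<pi>0 (fX (oX z, t))) \<and> \<not> pot (oX z, t) (\<pi>1 (fX (oX z, t))))) \<partial>P)"
  proof (rule FUB)
    show "(\<lambda>w. of_bool (pot w (\<pi>0 (fX w)) \<and> \<not> pot w (\<pi>1 (fX w))) :: real) \<in> borel_measurable (M \<Otimes>\<^sub>M count_space UNIV)"
      by (rule measurable_compose[OF cm measurable_of_bool])
  qed simp
  also have "\<dots> = (\<integral>z. (1 - l) * Lc \<pi>0 \<pi>1 (oX z) + l * Uc \<pi>0 \<pi>1 (oX z) \<partial>P)"
    by (intro Bochner_Integration.integral_cong refl) (simp add: fX_def FNA_pointwise)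
  also have "\<dots> = (1 - l) * (\<integral>z. Lc \<pi>0 \<pi>1 (oX z) \<partial>P) + l * (\<integral>z. Uc \<pi>0 \<pi>1 (oX z) \<partial>P)"
  proof -
    have iL: "integrable P (\<lambda>z. Lc \<pi>0 \<pi>1 (oX z))"
    proof (rule bnd_integrable[where c=1])
      fix z
      have b: "0 \<le> mc (oX z) True" "mc (oX z) True \<le> 1" "0 \<le> mc (oX z) False" "mc (oX z) False \<le> 1" by simp_all
      show "\<bar>Lc \<pi>0 \<pi>1 (oX z)\<bar> \<le> 1"
        unfolding Lc_def
        by (cases "\<pi>0 (oX z)"; cases "\<pi>1 (oX z)"; simp add: abs_le_iff max_def; use b in linarith)
    qed (use P.finite_measure_axioms in auto)
    have iU: "integrable P (\<lambda>z. Uc \<pi>0 \<pi>1 (oX z))"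
    proof (rule bnd_integrable[where c=1])
      fix z
      have b: "0 \<le> mc (oX z) True" "mc (oX z) True \<le> 1" "0 \<le> mc (oX z) False" "mc (oX z) False \<le> 1" by simp_all
      show "\<bar>Uc \<pi>0 \<pi>1 (oX z)\<bar> \<le> 1"
        unfolding Uc_def
        by (cases "\<pi>0 (oX z)"; cases "\<pi>1 (oX z)"; simp add: abs_le_iff min_def; use b in linarith)
    qed (use P.finite_measure_axioms in auto)
    show ?thesis using iL iU by simp
  qed
  finally show ?thesis .
qed

end


context obs_setting
begin

lemma ident_FNA:
  assumes pi0[measurable]: "\<pi>0 \<in> M \<rightarrow>\<^sub>M count_space UNIV" and pi1[measurable]: "\<pi>1 \<in> M \<rightarrow>\<^sub>M count_space UNIV"
  shows "identified_set M P (FNA \<pi>0 \<pi>1) = {(\<integral>z. Lc \<pi>0 \<pi>1 (oX z) \<partial>P) .. (\<integral>z. Uc \<pi>0 \<pi>1 (oX z) \<partial>P)}"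
proof (intro set_eqI iffI)
  fix t assume "t \<in> identified_set M P (FNA \<pi>0 \<pi>1)"
  then obtain F where t: "t = FNA \<pi>0 \<pi>1 F" and Fp: "prob_space F" and Fs: "sets F = sets (full_space M)"
    and Fd: "distr F (obs_space M) coarsen = P" and Fu: "unconfounded M F"
    unfolding identified_set_def by blast
  interpret fsetting M P e \<mu> F
    by (rule fsetting.intro[OF obs_setting_axioms]) (rule fsetting_axioms.intro[OF Fp Fs Fd Fu])
  show "t \<in> {(\<integral>z. Lc \<pi>0 \<pi>1 (oX z) \<partial>P) .. (\<integral>z. Uc \<pi>0 \<pi>1 (oX z) \<partial>P)}"
    using FNA_lower[OF pi0 pi1] FNA_upper[OF pi0 pi1] t by simp
next
  fix t assume "t \<in> {(\<integral>z. Lc \<pi>0 \<pi>1 (oX z) \<partial>P) .. (\<integral>z. Uc \<pi>0 \<pi>1 (oX z) \<partial>P)}"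
  then have tl: "(\<integral>z. Lc \<pi>0 \<pi>1 (oX z) \<partial>P) \<le> t" and tu: "t \<le> (\<integral>z. Uc \<pi>0 \<pi>1 (oX z) \<partial>P)" by auto
  define Lo where "Lo = (\<integral>z. Lc \<pi>0 \<pi>1 (oX z) \<partial>P)"
  define Up where "Up = (\<integral>z. Uc \<pi>0 \<pi>1 (oX z) \<partial>P)"
  define l where "l = (if Up = Lo then 0 else (t - Lo) / (Up - Lo))"
  have LU: "Lo \<le> t" "t \<le> Up" using tl tu unfolding Lo_def Up_def by auto
  have l0: "0 \<le> l" and l1: "l \<le> 1" using LU unfolding l_def by (auto simp: field_simps)
  have tl_eq: "t = (1 - l) * Lo + l * Up"
  proof (cases "Up = Lo")
    case True then show ?thesis using LU unfolding l_def by simp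
  next
    case False
    then have "Up - Lo \<noteq> 0" by simp
    then have a: "l * (Up - Lo) = t - Lo" unfolding l_def using False by simp
    have "(1 - l) * Lo + l * Up = Lo + l * (Up - Lo)" by (simp add: algebra_simps)
    then show ?thesis using a by simp
  qed
  interpret csetting M P e \<mu> l
    by (rule csetting.intro[OF obs_setting_axioms]) (rule csetting_axioms.intro[OF l0 l1])
  have "FNA \<pi>0 \<pi>1 Fc = t" using Fc_FNA[OF pi0 pi1] tl_eq unfolding Lo_def Up_def by simp
  moreover have "prob_space Fc" by (rule Fc_prob)
  moreover have "sets Fc = sets (full_space M)" by (simp add: sets_Fc full_space_eq)
  moreover have "distr Fc (obs_space M) coarsen = P" by (rule Fc_distr)
  moreover have "unconfounded M Fc" by (rule Fc_unc)
  ultimately show "t \<in> identified_set M P (FNA \<pi>0 \<pi>1)"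
    unfolding identified_set_def by blast
qed

end

theorem theorem2:
  fixes M :: "'x measure" and P :: "'x obs measure"
    and e :: "'x \<Rightarrow> real" and \<mu> :: "'x \<Rightarrow> bool \<Rightarrow> real"
    and \<pi>0 \<pi>1 :: "'x \<Rightarrow> bool"
  assumes P_prob: "prob_space P"
    and P_sets: "sets P = sets (obs_space M)"
    (* e is (a version of) the propensity score P(A = 1 | X) *)
    and e_meas: "e \<in> borel_measurable M"
    and e_version: "AE w in P. real_cond_exp P (vimage_algebra (space P) oX M)
                      (\<lambda>w. of_bool (oA w)) w = e (oX w)"
    (* overlap *)
    and overlap: "AE w in P. 0 < e (oX w) \<and> e (oX w) < 1"
    (* mu is (a version of) the outcome regression E_P[Y | X, A = a] *)
    and mu_meas: "(\<lambda>(x, a). \<mu> x a) \<in> borel_measurable (M \<Otimes>\<^sub>M count_space UNIV)"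
    and mu_version: "AE w in P. real_cond_exp P
                      (vimage_algebra (space P) (\<lambda>w. (oX w, oA w)) (M \<Otimes>\<^sub>M count_space UNIV))
                      (\<lambda>w. of_bool (oY w)) w = \<mu> (oX w) (oA w)"
    and pi0_meas: "\<pi>0 \<in> M \<rightarrow>\<^sub>M count_space UNIV"
    and pi1_meas: "\<pi>1 \<in> M \<rightarrow>\<^sub>M count_space UNIV"
  shows
    "identified_set M P (FNA \<pi>0 \<pi>1) =
       {(\<integral>w. max ((of_bool (\<pi>0 (oX w)) - of_bool (\<pi>1 (oX w)))
                      * (\<mu> (oX w) True - \<mu> (oX w) False)) 0 \<partial>P)
        ..
        (\<integral>w. min (of_bool (\<pi>1 (oX w)) * (1 - of_bool (\<pi>0 (oX w))) * \<mu> (oX w) False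
                   + of_bool (\<pi>0 (oX w)) * (1 - of_bool (\<pi>1 (oX w))) * (1 - \<mu> (oX w) False))
                  (of_bool (\<pi>1 (oX w)) * (1 - of_bool (\<pi>0 (oX w))) * (1 - \<mu> (oX w) True)
                   + of_bool (\<pi>0 (oX w)) * (1 - of_bool (\<pi>1 (oX w))) * \<mu> (oX w) True) \<partial>P)}
     \<and>
     identified_set M P (\<lambda>F. measure F {w \<in> space F. pot w False \<and> \<not> pot w True}) =
       {- (\<integral>w. min (\<mu> (oX w) True - \<mu> (oX w) False) 0 \<partial>P)
        ..
        (\<integral>w. min (\<mu> (oX w) False) (1 - \<mu> (oX w) True) \<partial>P)}"
proof -
  interpret obs_setting M P e \<mu>
    by (rule obs_setting.intro) (fact P_prob P_sets e_meas e_version overlap mu_meas mu_version)+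
  have first: "identified_set M P (FNA \<pi>0 \<pi>1) =
       {(\<integral>w. max ((of_bool (\<pi>0 (oX w)) - of_bool (\<pi>1 (oX w)))
                      * (\<mu> (oX w) True - \<mu> (oX w) False)) 0 \<partial>P)
        ..
        (\<integral>w. min (of_bool (\<pi>1 (oX w)) * (1 - of_bool (\<pi>0 (oX w))) * \<mu> (oX w) False
                   + of_bool (\<pi>0 (oX w)) * (1 - of_bool (\<pi>1 (oX w))) * (1 - \<mu> (oX w) False))
                  (of_bool (\<pi>1 (oX w)) * (1 - of_bool (\<pi>0 (oX w))) * (1 - \<mu> (oX w) True)
                   + of_bool (\<pi>0 (oX w)) * (1 - of_bool (\<pi>1 (oX w))) * \<mu> (oX w) True) \<partial>P)}"
    unfolding Lo_eq[OF pi0_meas pi1_meas] Up_eq[OF pi0_meas pi1_meas]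
    by (rule ident_FNA[OF pi0_meas pi1_meas])
  have c0: "(\<lambda>_. False) \<in> M \<rightarrow>\<^sub>M count_space UNIV" and c1: "(\<lambda>_. True) \<in> M \<rightarrow>\<^sub>M count_space UNIV"
    by simp_all
  have fe: "FNA (\<lambda>_. False) (\<lambda>_. True) = (\<lambda>F. measure F {w \<in> space F. pot w False \<and> \<not> pot w True})"
    by (simp add: FNA_def fun_eq_iff)
  have "identified_set M P (\<lambda>F. measure F {w \<in> space F. pot w False \<and> \<not> pot w True})
      = {(\<integral>w. max ((of_bool False - of_bool True) * (\<mu> (oX w) True - \<mu> (oX w) False)) 0 \<partial>P)
        .. (\<integral>w. min (of_bool True * (1 - of_bool False) * \<mu> (oX w) False
                   + of_bool False * (1 - of_bool True) * (1 - \<mu> (oX w) False))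
                  (of_bool True * (1 - of_bool False) * (1 - \<mu> (oX w) True)
                   + of_bool False * (1 - of_bool True) * \<mu> (oX w) True) \<partial>P)}"
    unfolding fe[symmetric] using Lo_eq[OF c0 c1] Up_eq[OF c0 c1] ident_FNA[OF c0 c1] by simp
  also have "\<dots> = {- (\<integral>w. min (\<mu> (oX w) True - \<mu> (oX w) False) 0 \<partial>P)
        .. (\<integral>w. min (\<mu> (oX w) False) (1 - \<mu> (oX w) True) \<partial>P)}"
  proof -
    have "(\<integral>w. max ((of_bool False - of_bool True) * (\<mu> (oX w) True - \<mu> (oX w) False)) 0 \<partial>P)
        = (\<integral>w. - min (\<mu> (oX w) True - \<mu> (oX w) False) 0 \<partial>P)"
      by (intro Bochner_Integration.integral_cong refl) (simp add: max_def min_def)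
    also have "\<dots> = - (\<integral>w. min (\<mu> (oX w) True - \<mu> (oX w) False) 0 \<partial>P)"
      by (rule Bochner_Integration.integral_minus)
    finally show ?thesis by simp
  qed
  finally show ?thesis using first by simp
qed

end
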